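(* Let $K\ge 1$ and $B\in\{1,\dots,K\}$ be integers, and put $K'=\lfloor K/B\rfloor$. Let $h_1,\dots,h_K,g_1,\dots,g_K,h_d$ be independent $\mathcal{CN}(0,1)$ random variables, set $v_k=h_kg_k$ for $k=1,\dots,K$, and for $i=1,\dots,K'$ set $v'_i=\sum_{b=1}^{B}v_{b+(i-1)B}$; write $\mathbf v'=(v'_1,\dots,v'_{K'})^T$. Let $\beta_d,\beta_l>0$, $P_{\rm tr}>0$, $\sigma^2>0$, $\gamma>0$, and let $T_c$ be an integer with $T_c>K'+1$. Pilot phase and estimates: put $T_p=K'+1$. Let $\Phi\in\mathbb C^{T_p\times T_p}$ be the DFT matrix $\Phi_{m,k}=e^{-j2\pi(m-1)(k-1)/T_p}$ ($m,k=1,\dots,T_p$), and write its $m$-th row as $[1,\boldsymbol\phi_m^T]$ with $\boldsymbol\phi_m\in\mathbb C^{K'}$. For $m=1,\dots,T_p$ let $y_m=\sqrt{P_{\rm tr}}\big(\sqrt{\beta_d}\,h_d+\sqrt{\beta_l}\,\boldsymbol\phi_m^T\mathbf v'\big)x_m+n_m$, where $x_m\in\mathbb C$ are fixed with $|x_m|=1$ and $n_1,\dots,n_{T_p}$ are i.i.d. $\mathcal{CN}(0,\sigma^2)$, independent of all channels. Define the least-squares estimates $\hat h_d,\hat{\mathbf v}'=(\hat v'_1,\dots,\hat v'_{K'})^T$ by $\big(\sqrt{\beta_d}\,\hat h_d,\ \sqrt{\beta_l}\,\hat{\mathbf v}'^T\big)^T=\frac{1}{\sqrt{P_{\rm tr}}}\Phi^{-1}\big(y_1x_1^*,\dots,y_{T_p}x_{T_p}^*\big)^T,$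 and define $\hat{\boldsymbol\phi}=(\hat\phi_1,\dots,\hat\phi_{K'})^T$ by $\hat\phi_i=e^{j\arg(\hat h_d/\hat v'_i)}$. Define the average achievable rate $R=\Big(1-\frac{K'+1}{T_c}\Big)\,\mathbb E\Big[\log_2\Big(1+\gamma\,\big|\sqrt{\beta_d}\,h_d+\sqrt{\beta_l}\,\hat{\boldsymbol\phi}^T\mathbf v'\big|^2\Big)\Big].$ Then $R\le\bar R$, where $\bar R=\Big(1-\frac{K'+1}{T_c}\Big)\log_2\Big(1+\gamma\big(\xi_1K'^2+\xi_2K'+\beta_d\big)\Big),$ with $\xi_1=\beta_l z^2$, $\xi_2=\beta_l(B-z^2)+\sqrt{\pi\beta_d\beta_l}\,z$, and $z=\frac{\sqrt{\pi}\,\Gamma(B+\tfrac12)}{2\,\Gamma(B)}.$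
   Context: $\mathcal{CN}(0,s)$ denotes a circularly-symmetric complex Gaussian with variance $s$; $j=\sqrt{-1}$; $\arg$ is the complex argument; $\Gamma$ is the Gamma function; $x^*$ is complex conjugation. Physically, $h_k,g_k$ are source–RIS and destination–RIS fading coefficients of a $K$-element reconfigurable intelligent surface whose elements are grouped into $K'$ groups of $B$ neighbouring elements sharing a common phase shift, $h_d$ is the direct-link coefficient, $\beta_d,\beta_l$ are path-loss coefficients, $\gamma$ is the transmit SNR and $T_c$ the coherence block length (in symbols). *)

theory Defs
  imports "HOL-Probability.Probability"
begin

text \<open>Index type for the independent Gaussian sources:
  H k = h_(k+1), G k = g_(k+1), Hd = h_d, N m = n_(m+1)  (0-based indices).\<close>
datatype chan_idx = H nat | G nat | Hd | N nat

definition CN_distributed :: "'a measure \<Rightarrow> ('a \<Rightarrow> complex) \<Rightarrow> real \<Rightarrow> bool" where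
  "CN_distributed M X s \<longleftrightarrow>
     distributed M lborel X (\<lambda>z. ennreal (exp (- (cmod z)\<^sup>2 / s) / (pi * s)))"

text \<open>DFT matrix of size T (0-based): Phi m k = exp(-j 2 pi m k / T).\<close>
definition dft :: "nat \<Rightarrow> nat \<Rightarrow> nat \<Rightarrow> complex" where
  "dft T m k = cis (- 2 * pi * real m * real k / real T)"

definition mat_inv :: "nat \<Rightarrow> (nat \<Rightarrow> nat \<Rightarrow> complex) \<Rightarrow> (nat \<Rightarrow> nat \<Rightarrow> complex)" where
  "mat_inv n A = (THE C. (\<forall>i j. (n \<le> i \<or> n \<le> j) \<longrightarrow> C i j = 0) \<and>
      (\<forall>i<n. \<forall>j<n. (\<Sum>k<n. A i k * C k j) = (if i = j then 1 else 0)) \<and>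
      (\<forall>i<n. \<forall>j<n. (\<Sum>k<n. C i k * A k j) = (if i = j then 1 else 0)))"

text \<open>v'_(i+1) = sum_(b=1..B) h_(b+iB) g_(b+iB), i = 0..K'-1 (0-based).\<close>
definition vgrp :: "(chan_idx \<Rightarrow> 'a \<Rightarrow> complex) \<Rightarrow> nat \<Rightarrow> nat \<Rightarrow> 'a \<Rightarrow> complex" where
  "vgrp Z B i \<omega> = (\<Sum>b<B. Z (H (b + i * B)) \<omega> * Z (G (b + i * B)) \<omega>)"

text \<open>Received pilot y_(m+1), m = 0..Tp-1, with Tp = K'+1.\<close>
definition pilot_y :: "(chan_idx \<Rightarrow> 'a \<Rightarrow> complex) \<Rightarrow> nat \<Rightarrow> nat \<Rightarrow> real \<Rightarrow> real \<Rightarrow> real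
    \<Rightarrow> (nat \<Rightarrow> complex) \<Rightarrow> nat \<Rightarrow> 'a \<Rightarrow> complex" where
  "pilot_y Z B K' P \<beta>d \<beta>l x m \<omega> =
     complex_of_real (sqrt P) *
       (complex_of_real (sqrt \<beta>d) * Z Hd \<omega> +
        complex_of_real (sqrt \<beta>l) * (\<Sum>i<K'. dft (K'+1) m (i+1) * vgrp Z B i \<omega>)) * x m
     + Z (N m) \<omega>"

text \<open>Least-squares vector (sqrt(beta_d) hhat_d, sqrt(beta_l) vhat'^T)^T, entries 0..K'.\<close>
definition ls_est :: "(chan_idx \<Rightarrow> 'a \<Rightarrow> complex) \<Rightarrow> nat \<Rightarrow> nat \<Rightarrow> real \<Rightarrow> real \<Rightarrow> real
    \<Rightarrow> (nat \<Rightarrow> complex) \<Rightarrow> nat \<Rightarrow> 'a \<Rightarrow> complex" where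
  "ls_est Z B K' P \<beta>d \<beta>l x k \<omega> =
     (\<Sum>m<K'+1. mat_inv (K'+1) (dft (K'+1)) k m *
        (pilot_y Z B K' P \<beta>d \<beta>l x m \<omega> * cnj (x m))) / complex_of_real (sqrt P)"

definition hd_hat where
  "hd_hat Z B K' P \<beta>d \<beta>l x \<omega> = ls_est Z B K' P \<beta>d \<beta>l x 0 \<omega> / complex_of_real (sqrt \<beta>d)"

definition v_hat where
  "v_hat Z B K' P \<beta>d \<beta>l x i \<omega> = ls_est Z B K' P \<beta>d \<beta>l x (i+1) \<omega> / complex_of_real (sqrt \<beta>l)"

definition phi_hat where
  "phi_hat Z B K' P \<beta>d \<beta>l x i \<omega> =
     cis (Arg (hd_hat Z B K' P \<beta>d \<beta>l x \<omega> / v_hat Z B K' P \<beta>d \<beta>l x i \<omega>))"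

definition eff_gain where
  "eff_gain Z B K' P \<beta>d \<beta>l x \<omega> =
     (cmod (complex_of_real (sqrt \<beta>d) * Z Hd \<omega> +
        complex_of_real (sqrt \<beta>l) * (\<Sum>i<K'. phi_hat Z B K' P \<beta>d \<beta>l x i \<omega> * vgrp Z B i \<omega>)))\<^sup>2"

end

theory Submission
  imports Defs "HOL-Analysis.Ball_Volume"
begin


definition cnd :: "real \<Rightarrow> complex \<Rightarrow> real" where
  "cnd s z = exp (- (cmod z)\<^sup>2 / s) / (pi * s)"

lemma cnd_nonneg: "s \<ge> 0 \<Longrightarrow> 0 \<le> cnd s z"
  by (simp add: cnd_def)

lemma cnd_measurable[measurable]: "cnd s \<in> borel_measurable borel"
  unfolding cnd_def by measurable

lemma emeasure_sqnorm_le: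
  assumes "a \<ge> 0"
  shows "emeasure (lborel::complex measure) {w. (cmod w)\<^sup>2 \<le> a} = ennreal (pi * a)"
proof -
  have "{w::complex. (cmod w)\<^sup>2 \<le> a} = cball 0 (sqrt a)"
    using assms by (auto simp: dist_norm intro: real_le_rsqrt)
       (metis norm_ge_zero power_mono real_sqrt_pow2)
  then show ?thesis using assms emeasure_cball[of "sqrt a" "0::complex"]
    by (simp add: unit_ball_vol_2)
qed

lemma distr_sqnorm:
  "distr (lborel::complex measure) borel (\<lambda>w. (cmod w)\<^sup>2) =
     density lborel (\<lambda>r. ennreal pi * indicator {0..} r)"
proof (rule measure_eqI_generator_eq_countable[where E="range atMost" and \<Omega>=UNIV
      and A="range (\<lambda>n::nat. {..real n})"])
  show "Int_stable (range atMost :: real set set)"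
    by (auto simp: Int_stable_def intro!: exI[of _ "min _ _"])
  show "range atMost \<subseteq> Pow (UNIV::real set)" by auto
  have sb: "sets (borel::real measure) = sigma_sets UNIV (range atMost)"
    by (subst borel_eq_atMost) (simp add: sets_measure_of)
  show "sets (distr (lborel::complex measure) borel (\<lambda>w. (cmod w)\<^sup>2)) = sigma_sets UNIV (range atMost :: real set set)"
    using sb by simp
  show "sets (density lborel (\<lambda>r. ennreal pi * indicator {0..} r)) = sigma_sets UNIV (range atMost :: real set set)"
    using sb by simp
  have eq: "emeasure (distr (lborel::complex measure) borel (\<lambda>w. (cmod w)\<^sup>2)) {..a} =
        emeasure (density lborel (\<lambda>r. ennreal pi * indicator {0..} r)) {..a}" for a :: real
  proof -
    have l: "emeasure (distr (lborel::complex measure) borel (\<lambda>w. (cmod w)\<^sup>2)) {..a}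
          = emeasure lborel {w::complex. (cmod w)\<^sup>2 \<le> a}"
      by (subst emeasure_distr) (auto simp: vimage_def)
    have r: "emeasure (density lborel (\<lambda>r. ennreal pi * indicator {0..} r)) {..a}
          = (\<integral>\<^sup>+x. ennreal pi * indicator ({0..a}) x \<partial>lborel)"
      by (subst emeasure_density) (auto intro!: nn_integral_cong split: split_indicator)
    show ?thesis
    proof (cases "a \<ge> 0")
      case True
      then show ?thesis using l r emeasure_sqnorm_le[OF True]
        by (simp add: nn_integral_cmult ennreal_mult)
    next
      case False
      then have "{w::complex. (cmod w)\<^sup>2 \<le> a} = {}"
        by (auto simp: not_le) (meson less_le_trans zero_le_power2)
      moreover have "{0..a} = {}" using False by auto
      ultimately show ?thesis using l r by simp
    qed
  qed
  show "X \<in> range atMost \<Longrightarrow> emeasure (distr lborel borel (\<lambda>w. (cmod w)\<^sup>2)) X =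
        emeasure (density lborel (\<lambda>r. ennreal pi * indicator {0..} r)) X" for X
    using eq by auto
  show "range (\<lambda>n::nat. {..real n}) \<subseteq> range atMost" by auto
  show "\<Union> (range (\<lambda>n::nat. {..real n})) = UNIV"
    by (auto intro: real_arch_simple)
  show "countable (range (\<lambda>n::nat. {..real n}))" by simp
  show "a \<in> range (\<lambda>n::nat. {..real n}) \<Longrightarrow>
        emeasure (distr (lborel::complex measure) borel (\<lambda>w. (cmod w)\<^sup>2)) a \<noteq> \<infinity>" for a
  proof -
    assume "a \<in> range (\<lambda>n::nat. {..real n})"
    then obtain n where a: "a = {..real n}" by auto
    have "emeasure (distr (lborel::complex measure) borel (\<lambda>w. (cmod w)\<^sup>2)) a
          = emeasure lborel {w::complex. (cmod w)\<^sup>2 \<le> real n}"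
      unfolding a by (subst emeasure_distr) (auto simp: vimage_def)
    also have "\<dots> = ennreal (pi * real n)" by (rule emeasure_sqnorm_le) simp
    finally show ?thesis by simp
  qed
qed

lemma nn_integral_radial:
  assumes [measurable]: "f \<in> borel_measurable borel"
  shows "(\<integral>\<^sup>+w. f ((cmod (w::complex))\<^sup>2) \<partial>lborel) =
         (\<integral>\<^sup>+r. ennreal pi * indicator {0..} r * f r \<partial>lborel)"
proof -
  have "(\<integral>\<^sup>+w. f ((cmod (w::complex))\<^sup>2) \<partial>lborel) =
        (\<integral>\<^sup>+r. f r \<partial>distr (lborel::complex measure) borel (\<lambda>w. (cmod w)\<^sup>2))"
    by (subst nn_integral_distr) auto
  also have "\<dots> = (\<integral>\<^sup>+r. ennreal pi * indicator {0..} r * f r \<partial>lborel)"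
    unfolding distr_sqnorm by (subst nn_integral_density) auto
  finally show ?thesis .
qed

lemma gamma_nn:
  assumes a: "a > -1" and s: "s > 0"
  shows "(\<integral>\<^sup>+r. ennreal (indicator {0..} r * (r powr a * exp (- r / s))) \<partial>lborel)
         = ennreal (s powr (a + 1) * Gamma (a + 1))"
proof -
  have "((\<lambda>t. t powr a / exp t) has_integral Gamma (a + 1)) {0..}"
    using Gamma_integral_real[of "a + 1"] a by simp
  then have "((\<lambda>t. indicator {0..} t * (t powr a / exp t)) has_integral Gamma (a + 1)) UNIV"
  proof -
    have "(\<lambda>t. indicator {0..} t * (t powr a / exp t)) = (\<lambda>t. if t \<in> {0..} then t powr a / exp t else 0)"
      by (auto simp: indicator_def fun_eq_iff)
    then show ?thesis using \<open>((\<lambda>t. t powr a / exp t) has_integral Gamma (a + 1)) {0..}\<close>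
      by (simp only: has_integral_restrict_UNIV)
  qed
  then have G: "(\<integral>\<^sup>+t. ennreal (indicator {0..} t * (t powr a / exp t)) \<partial>lborel) = ennreal (Gamma (a + 1))"
    by (subst nn_integral_has_integral_lborel) (auto simp: indicator_def)
  have "(\<integral>\<^sup>+r. ennreal (indicator {0..} r * (r powr a * exp (- r / s))) \<partial>lborel)
      = ennreal \<bar>s\<bar> * (\<integral>\<^sup>+t. ennreal (indicator {0..} (0 + s * t) * ((0 + s * t) powr a * exp (- (0 + s * t) / s))) \<partial>lborel)"
    using s by (subst nn_integral_real_affine[where c=s and t=0]) auto
  also have "(\<lambda>t. ennreal (indicator {0..} (0 + s * t) * ((0 + s * t) powr a * exp (- (0 + s * t) / s))))
      = (\<lambda>t. ennreal (s powr a) * ennreal (indicator {0..} t * (t powr a / exp t)))"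
  proof
    fix t :: real
    show "ennreal (indicator {0..} (0 + s * t) * ((0 + s * t) powr a * exp (- (0 + s * t) / s)))
      = ennreal (s powr a) * ennreal (indicator {0..} t * (t powr a / exp t))"
      using s by (cases "t \<ge> 0")
        (auto simp: indicator_def powr_mult exp_minus field_simps ennreal_mult[symmetric] zero_le_mult_iff)
  qed
  also have "ennreal \<bar>s\<bar> * (\<integral>\<^sup>+t. ennreal (s powr a) * ennreal (indicator {0..} t * (t powr a / exp t)) \<partial>lborel)
      = ennreal (s * s powr a * Gamma (a + 1))"
    using s a by (subst nn_integral_cmult) (auto simp: G[simplified] ennreal_mult[symmetric] Gamma_real_pos less_imp_le)
  finally show ?thesis using s by (simp add: powr_add mult_ac)
qed



lemma nn_integral_translate:
  fixes f :: "'a::euclidean_space \<Rightarrow> ennreal"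
  assumes [measurable]: "f \<in> borel_measurable borel"
  shows "(\<integral>\<^sup>+u. f (u + a) \<partial>lborel) = (\<integral>\<^sup>+u. f u \<partial>lborel)"
proof -
  have "(\<integral>\<^sup>+u. f u \<partial>lborel) = (\<integral>\<^sup>+u. f u \<partial>distr lborel borel ((+) a))"
    by (simp add: lborel_distr_plus)
  also have "\<dots> = (\<integral>\<^sup>+u. f (a + u) \<partial>lborel)"
    by (subst nn_integral_distr) auto
  finally show ?thesis by (simp add: add.commute)
qed

lemma exp_nn:
  assumes s: "s > 0"
  shows "(\<integral>\<^sup>+r. ennreal (indicator {0..} r * exp (- r / s)) \<partial>lborel) = ennreal s"
proof -
  have "(\<integral>\<^sup>+r. ennreal (indicator {0..} r * exp (- r / s)) \<partial>lborel)
      = (\<integral>\<^sup>+r. ennreal (indicator {0..} r * (r powr 0 * exp (- r / s))) \<partial>lborel)"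
    by (intro nn_integral_cong_AE eventually_mono[OF AE_lborel_singleton[of 0]])
       (auto simp: indicator_def)
  also have "\<dots> = ennreal s"
    using gamma_nn[of 0 s] s by simp
  finally show ?thesis .
qed

lemma gauss2d:
  assumes k: "k > 0"
  shows "(\<integral>\<^sup>+y. ennreal (exp (- k * (cmod (y - m))\<^sup>2)) \<partial>lborel) = ennreal (pi / k)"
proof -
  have "(\<integral>\<^sup>+y. ennreal (exp (- k * (cmod (y - m))\<^sup>2)) \<partial>lborel)
      = (\<integral>\<^sup>+y. ennreal (exp (- k * (cmod ((y + m) - m))\<^sup>2)) \<partial>lborel)"
    by (rule nn_integral_translate[symmetric]) measurable
  also have "\<dots> = (\<integral>\<^sup>+y. (\<lambda>r. ennreal (exp (- k * r))) ((cmod (y::complex))\<^sup>2) \<partial>lborel)"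
    by simp
  also have "\<dots> = (\<integral>\<^sup>+r. ennreal pi * indicator {0..} r * ennreal (exp (- k * r)) \<partial>lborel)"
    by (rule nn_integral_radial) measurable
  also have "\<dots> = (\<integral>\<^sup>+r. ennreal pi * ennreal (indicator {0..} r * exp (- r / (1/k))) \<partial>lborel)"
    by (intro nn_integral_cong) (auto simp: indicator_def mult.commute)
  also have "\<dots> = ennreal pi * ennreal (1/k)"
    using k exp_nn[of "1/k"] by (subst nn_integral_cmult) auto
  finally show ?thesis using k by (simp add: ennreal_mult[symmetric])
qed

lemma cnd_total:
  assumes s: "s > 0"
  shows "(\<integral>\<^sup>+w. ennreal (cnd s w) \<partial>lborel) = 1"
proof -
  have "(\<integral>\<^sup>+w. ennreal (cnd s w) \<partial>lborel)
      = (\<integral>\<^sup>+w. (\<lambda>r. ennreal (exp (- r / s) / (pi * s))) ((cmod (w::complex))\<^sup>2) \<partial>lborel)"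
    by (simp add: cnd_def)
  also have "\<dots> = (\<integral>\<^sup>+r. ennreal pi * indicator {0..} r * ennreal (exp (- r / s) / (pi * s)) \<partial>lborel)"
    by (rule nn_integral_radial) measurable
  also have "\<dots> = (\<integral>\<^sup>+r. ennreal (1 / s) * ennreal (indicator {0..} r * exp (- r / s)) \<partial>lborel)"
    using s by (intro nn_integral_cong) (auto simp: indicator_def ennreal_mult[symmetric])
  also have "\<dots> = ennreal (1 / s) * ennreal s"
    using s by (subst nn_integral_cmult) (auto simp: exp_nn[simplified])
  finally show ?thesis using s by (simp add: ennreal_mult[symmetric])
qed

lemma sq_powr_half:
  fixes x q :: real
  assumes "x \<ge> 0" shows "(x\<^sup>2) powr (q / 2) = x powr q"
proof (cases "x = 0")
  case False
  then have "x > 0" using assms by simp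
  then have "x\<^sup>2 = x powr 2" by (simp add: powr_realpow)
  then show ?thesis by (simp add: powr_powr)
qed simp

lemma cnd_moment:
  assumes s: "s > 0" and q: "q > 0"
  shows "(\<integral>\<^sup>+w. ennreal ((cmod w) powr q * cnd s w) \<partial>lborel) = ennreal (s powr (q / 2) * Gamma (q / 2 + 1))"
proof -
  have "(\<integral>\<^sup>+w. ennreal ((cmod w) powr q * cnd s w) \<partial>lborel)
      = (\<integral>\<^sup>+w. (\<lambda>r. ennreal (r powr (q/2) * (exp (- r / s) / (pi * s)))) ((cmod (w::complex))\<^sup>2) \<partial>lborel)"
    by (simp add: cnd_def sq_powr_half)
  also have "\<dots> = (\<integral>\<^sup>+r. ennreal pi * indicator {0..} r * ennreal (r powr (q/2) * (exp (- r / s) / (pi * s))) \<partial>lborel)"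
    by (rule nn_integral_radial) measurable
  also have "\<dots> = (\<integral>\<^sup>+r. ennreal (1 / s) * ennreal (indicator {0..} r * (r powr (q/2) * exp (- r / s))) \<partial>lborel)"
    using s by (intro nn_integral_cong) (auto simp: indicator_def ennreal_mult[symmetric])
  also have "\<dots> = ennreal (1 / s) * ennreal (s powr (q / 2 + 1) * Gamma (q / 2 + 1))"
    using s q gamma_nn[of "q/2" s] by (subst nn_integral_cmult) auto
  also have "\<dots> = ennreal (s powr (q / 2) * Gamma (q / 2 + 1))"
    using s q by (subst ennreal_mult[symmetric]) (auto simp: powr_add Gamma_real_pos less_imp_le)
  finally show ?thesis .
qed

lemma expo_identity:
  fixes y w c :: complex and s :: real
  defines "T \<equiv> s + (cmod c)\<^sup>2"
  shows "s * T * (cmod y)\<^sup>2 + T * (cmod (w - c * y))\<^sup>2 = s * (cmod w)\<^sup>2 + (cmod (of_real T * y - w * cnj c))\<^sup>2"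
  unfolding T_def cmod_power2
  by (simp add: algebra_simps power2_eq_square)



lemma cnd_prod_pointwise:
  fixes c w y :: complex
  assumes s: "s > 0"
  defines "T \<equiv> s + (cmod c)\<^sup>2"
  defines "m \<equiv> w * cnj c / of_real T"
  shows "cnd 1 y * cnd s (w - c * y) = cnd T w * (T / (pi * s)) * exp (- (T / s) * (cmod (y - m))\<^sup>2)"
proof -
  have T: "T > 0" unfolding T_def using s by (simp add: add_pos_nonneg)
  have ym: "of_real T * (y - m) = of_real T * y - w * cnj c"
    using T by (simp add: m_def field_simps)
  have nm0: "cmod (of_real T * y - w * cnj c) = T * cmod (y - m)"
    using T by (simp add: ym[symmetric] norm_mult del: of_real_diff)
  have key: "s * T * (cmod y)\<^sup>2 + T * (cmod (w - c * y))\<^sup>2 = s * (cmod w)\<^sup>2 + (cmod (of_real T * y - w * cnj c))\<^sup>2"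
    unfolding T_def by (rule expo_identity)
  have e: "- (cmod y)\<^sup>2 - (cmod (w - c * y))\<^sup>2 / s = - (cmod w)\<^sup>2 / T - (T / s) * (cmod (y - m))\<^sup>2"
  proof -
    have "- (cmod y)\<^sup>2 - (cmod (w - c * y))\<^sup>2 / s = - (s * T * (cmod y)\<^sup>2 + T * (cmod (w - c * y))\<^sup>2) / (s * T)"
      using s T by (simp add: field_simps)
    also have "\<dots> = - (s * (cmod w)\<^sup>2 + (cmod (of_real T * y - w * cnj c))\<^sup>2) / (s * T)"
      by (simp only: key)
    also have "\<dots> = - (cmod w)\<^sup>2 / T - (T / s) * (cmod (y - m))\<^sup>2"
      using s T by (simp only: nm0) (simp add: power_mult_distrib field_simps power2_eq_square)
    finally show ?thesis .
  qed
  have "cnd 1 y * cnd s (w - c * y) = exp (- (cmod y)\<^sup>2 - (cmod (w - c * y))\<^sup>2 / s) / (pi * (pi * s))"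
    by (simp add: cnd_def exp_diff exp_minus field_simps)
  also have "\<dots> = exp (- (cmod w)\<^sup>2 / T - (T / s) * (cmod (y - m))\<^sup>2) / (pi * (pi * s))"
    by (simp only: e)
  also have "\<dots> = exp (- (cmod w)\<^sup>2 / T) * exp (- (T / s) * (cmod (y - m))\<^sup>2) / (pi * (pi * s))"
    by (simp add: mult_exp_exp)
  also have "\<dots> = cnd T w * (T / (pi * s)) * exp (- (T / s) * (cmod (y - m))\<^sup>2)"
    using s T by (simp add: cnd_def)
  finally show ?thesis .
qed

lemma cnd_prod_int:
  assumes s: "s > 0"
  shows "(\<integral>\<^sup>+y. ennreal (cnd 1 y * cnd s (w - c * y)) \<partial>lborel) = ennreal (cnd (s + (cmod c)\<^sup>2) w)"
proof -
  define T where "T = s + (cmod c)\<^sup>2"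
  define m where "m = w * cnj c / of_real T"
  have T: "T > 0" unfolding T_def using s by (simp add: add_pos_nonneg)
  have pw: "cnd 1 y * cnd s (w - c * y) = cnd T w * (T / (pi * s)) * exp (- (T / s) * (cmod (y - m))\<^sup>2)" for y
    unfolding T_def m_def by (rule cnd_prod_pointwise[OF s])
  have "(\<integral>\<^sup>+y. ennreal (cnd 1 y * cnd s (w - c * y)) \<partial>lborel)
      = (\<integral>\<^sup>+y. ennreal (cnd T w * (T / (pi * s))) * ennreal (exp (- (T / s) * (cmod (y - m))\<^sup>2)) \<partial>lborel)"
    using s T by (intro nn_integral_cong)
      (simp only: pw, simp add: ennreal_mult[symmetric] cnd_nonneg)
  also have "\<dots> = ennreal (cnd T w * (T / (pi * s))) * ennreal (pi / (T / s))"
    using s T gauss2d[of "T/s" m] by (subst nn_integral_cmult) auto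
  also have "\<dots> = ennreal (cnd T w)"
    using s T by (subst ennreal_mult[symmetric]) (auto simp: cnd_nonneg)
  finally show ?thesis unfolding T_def .
qed



lemma cnd_conv:
  fixes f :: "complex \<Rightarrow> ennreal" and c :: complex
  assumes s: "s > 0" and [measurable]: "f \<in> borel_measurable borel"
  shows "(\<integral>\<^sup>+y. ennreal (cnd 1 y) * (\<integral>\<^sup>+u. f (u + c * y) * ennreal (cnd s u) \<partial>lborel) \<partial>lborel)
       = (\<integral>\<^sup>+w. f w * ennreal (cnd (s + (cmod c)\<^sup>2) w) \<partial>lborel)"
proof -
  have inner: "(\<integral>\<^sup>+u. f (u + c * y) * ennreal (cnd s u) \<partial>lborel) = (\<integral>\<^sup>+w. f w * ennreal (cnd s (w - c * y)) \<partial>lborel)" for y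
    using nn_integral_translate[of "\<lambda>w. f w * ennreal (cnd s (w - c * y))" "c * y"] by simp
  have "(\<integral>\<^sup>+y. ennreal (cnd 1 y) * (\<integral>\<^sup>+u. f (u + c * y) * ennreal (cnd s u) \<partial>lborel) \<partial>lborel)
      = (\<integral>\<^sup>+y. (\<integral>\<^sup>+w. ennreal (cnd 1 y) * (f w * ennreal (cnd s (w - c * y))) \<partial>lborel) \<partial>lborel)"
    by (simp add: inner nn_integral_cmult)
  also have "\<dots> = (\<integral>\<^sup>+w. (\<integral>\<^sup>+y. ennreal (cnd 1 y) * (f w * ennreal (cnd s (w - c * y))) \<partial>lborel) \<partial>lborel)"
    by (rule lborel_pair.Fubini') measurable
  also have "\<dots> = (\<integral>\<^sup>+w. f w * (\<integral>\<^sup>+y. ennreal (cnd 1 y * cnd s (w - c * y)) \<partial>lborel) \<partial>lborel)"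
    by (subst nn_integral_cmult[symmetric]) (auto intro!: nn_integral_cong simp: ennreal_mult[symmetric] cnd_nonneg mult_ac s less_imp_le)
  also have "\<dots> = (\<integral>\<^sup>+w. f w * ennreal (cnd (s + (cmod c)\<^sup>2) w) \<partial>lborel)"
    by (simp add: cnd_prod_int[OF s])
  finally show ?thesis .
qed



definition CN1 :: "real \<Rightarrow> complex measure" where
  "CN1 s = density lborel (\<lambda>z. ennreal (cnd s z))"

lemma sets_CN1[simp, measurable_cong]: "sets (CN1 s) = sets borel"
  by (simp add: CN1_def)

lemma space_CN1[simp]: "space (CN1 s) = UNIV"
  by (simp add: CN1_def)

lemma prob_space_CN1: "s > 0 \<Longrightarrow> prob_space (CN1 s)"
  by (rule prob_spaceI) (simp add: CN1_def emeasure_density cnd_total)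

lemma nn_integral_CN1: "f \<in> borel_measurable borel \<Longrightarrow> (\<integral>\<^sup>+x. f x \<partial>CN1 s) = (\<integral>\<^sup>+x. ennreal (cnd s x) * f x \<partial>lborel)"
  unfolding CN1_def by (subst nn_integral_density) auto

interpretation CN1p: prob_space "CN1 1"
  by (rule prob_space_CN1) simp

interpretation CN1ps: product_sigma_finite "\<lambda>_::'i. CN1 1"
  by (simp add: product_sigma_finite_def CN1p.sigma_finite_measure_axioms)

lemma L2core:
  fixes f :: "complex \<Rightarrow> ennreal" and e :: "'i \<Rightarrow> complex" and J :: "'i set"
  assumes J: "finite J" and [measurable]: "f \<in> borel_measurable borel"
  shows "s > 0 \<Longrightarrow> (\<integral>\<^sup>+x. (\<integral>\<^sup>+u. f (u + (\<Sum>j\<in>J. e j * x j)) * ennreal (cnd s u) \<partial>lborel) \<partial>PiM J (\<lambda>_. CN1 1))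
     = (\<integral>\<^sup>+w. f w * ennreal (cnd (s + (\<Sum>j\<in>J. (cmod (e j))\<^sup>2)) w) \<partial>lborel)"
  using J
proof (induction J arbitrary: s rule: finite_induct)
  case empty
  then show ?case by (simp add: PiM_empty nn_integral_count_space_finite)
next
  case (insert j J)
  have s: "s > 0" by fact
  have "(\<integral>\<^sup>+x. (\<integral>\<^sup>+u. f (u + (\<Sum>j\<in>insert j J. e j * x j)) * ennreal (cnd s u) \<partial>lborel) \<partial>PiM (insert j J) (\<lambda>_. CN1 1))
     = (\<integral>\<^sup>+x. (\<integral>\<^sup>+y. (\<integral>\<^sup>+u. f (u + (\<Sum>i\<in>insert j J. e i * (x(j := y)) i)) * ennreal (cnd s u) \<partial>lborel) \<partial>CN1 1) \<partial>PiM J (\<lambda>_. CN1 1))"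
    using insert by (subst CN1ps.product_nn_integral_insert) (auto, measurable)
  also have "\<dots> = (\<integral>\<^sup>+x. (\<integral>\<^sup>+y. ennreal (cnd 1 y) * (\<integral>\<^sup>+u. (\<lambda>v. f (v + (\<Sum>i\<in>J. e i * x i))) (u + e j * y) * ennreal (cnd s u) \<partial>lborel) \<partial>lborel) \<partial>PiM J (\<lambda>_. CN1 1))"
  proof (intro nn_integral_cong)
    fix x
    have "(\<Sum>i\<in>J. e i * (x(j := y)) i) = (\<Sum>i\<in>J. e i * x i)" for y
      using insert by (intro sum.cong) auto
    then show "(\<integral>\<^sup>+y. (\<integral>\<^sup>+u. f (u + (\<Sum>i\<in>insert j J. e i * (x(j := y)) i)) * ennreal (cnd s u) \<partial>lborel) \<partial>CN1 1)
      = (\<integral>\<^sup>+y. ennreal (cnd 1 y) * (\<integral>\<^sup>+u. (\<lambda>v. f (v + (\<Sum>i\<in>J. e i * x i))) (u + e j * y) * ennreal (cnd s u) \<partial>lborel) \<partial>lborel)"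
      using insert by (subst nn_integral_CN1) (simp_all add: add_ac)
  qed
  also have "\<dots> = (\<integral>\<^sup>+x. (\<integral>\<^sup>+w. f (w + (\<Sum>i\<in>J. e i * x i)) * ennreal (cnd (s + (cmod (e j))\<^sup>2) w) \<partial>lborel) \<partial>PiM J (\<lambda>_. CN1 1))"
    by (rule nn_integral_cong, rule cnd_conv[OF s]) measurable
  also have "\<dots> = (\<integral>\<^sup>+w. f w * ennreal (cnd (s + (cmod (e j))\<^sup>2 + (\<Sum>j\<in>J. (cmod (e j))\<^sup>2)) w) \<partial>lborel)"
    using s by (intro insert.IH) (simp add: add_pos_nonneg)
  finally show ?case using insert by (simp add: add_ac)
qed



lemma L2_moment:
  fixes e :: "'i \<Rightarrow> complex" and J :: "'i set"
  assumes J: "finite J" and q: "q > 0"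
  shows "(\<integral>\<^sup>+x. ennreal ((cmod (\<Sum>j\<in>J. e j * x j)) powr q) \<partial>PiM J (\<lambda>_. CN1 1))
     = ennreal ((\<Sum>j\<in>J. (cmod (e j))\<^sup>2) powr (q / 2) * Gamma (q / 2 + 1))"
proof (cases "\<forall>j\<in>J. e j = 0")
  case True
  then show ?thesis by simp
next
  case False
  then obtain j0 where j0: "j0 \<in> J" "e j0 \<noteq> 0" by auto
  define J' where "J' = J - {j0}"
  have JJ: "J = insert j0 J'" "j0 \<notin> J'" "finite J'" using j0 J by (auto simp: J'_def)
  define a where "a = e j0"
  define e' where "e' = (\<lambda>j. e j / a)"
  have a: "a \<noteq> 0" using j0 by (simp add: a_def)
  have S: "(\<Sum>j\<in>J. (cmod (e j))\<^sup>2) = (cmod a)\<^sup>2 * (1 + (\<Sum>j\<in>J'. (cmod (e' j))\<^sup>2))"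
    using a JJ by (simp add: a_def e'_def sum_distrib_left norm_divide power_divide field_simps)
  have pt: "(cmod (\<Sum>j\<in>J. e j * (x(j0 := y)) j)) powr q = (cmod a) powr q * (cmod (y + (\<Sum>j\<in>J'. e' j * x j))) powr q" for x y
  proof -
    have "(\<Sum>j\<in>J. e j * (x(j0 := y)) j) = a * y + (\<Sum>j\<in>J'. e j * x j)"
      using JJ by (simp add: a_def, intro sum.cong) auto
    also have "\<dots> = a * (y + (\<Sum>j\<in>J'. e' j * x j))"
      using a by (simp add: e'_def sum_distrib_left distrib_left)
    finally show ?thesis by (simp add: norm_mult powr_mult)
  qed
  have "(\<integral>\<^sup>+x. ennreal ((cmod (\<Sum>j\<in>J. e j * x j)) powr q) \<partial>PiM J (\<lambda>_. CN1 1))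
      = (\<integral>\<^sup>+x. (\<integral>\<^sup>+y. ennreal ((cmod (\<Sum>j\<in>J. e j * (x(j0 := y)) j)) powr q) \<partial>CN1 1) \<partial>PiM J' (\<lambda>_. CN1 1))"
    unfolding JJ(1) using JJ by (subst CN1ps.product_nn_integral_insert) (auto, measurable)
  also have "\<dots> = (\<integral>\<^sup>+x. (\<integral>\<^sup>+u. (\<lambda>v. ennreal ((cmod a) powr q * (cmod v) powr q)) (u + (\<Sum>j\<in>J'. e' j * x j)) * ennreal (cnd 1 u) \<partial>lborel) \<partial>PiM J' (\<lambda>_. CN1 1))"
    apply (rule nn_integral_cong)
    apply (simp only: pt)
    apply (subst nn_integral_CN1)
     apply measurable
    apply (simp add: ennreal_mult mult_ac)
    done
  also have "\<dots> = (\<integral>\<^sup>+w. ennreal ((cmod a) powr q * (cmod w) powr q) * ennreal (cnd (1 + (\<Sum>j\<in>J'. (cmod (e' j))\<^sup>2)) w) \<partial>lborel)"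
    by (rule L2core[OF JJ(3)]) auto
  also have "\<dots> = ennreal ((cmod a) powr q) * (\<integral>\<^sup>+w. ennreal ((cmod w) powr q * cnd (1 + (\<Sum>j\<in>J'. (cmod (e' j))\<^sup>2)) w) \<partial>lborel)"
    by (subst nn_integral_cmult[symmetric]) (auto intro!: nn_integral_cong simp: ennreal_mult[symmetric] mult_ac cnd_nonneg add_nonneg_nonneg sum_nonneg)
  also have "\<dots> = ennreal ((cmod a) powr q) * ennreal ((1 + (\<Sum>j\<in>J'. (cmod (e' j))\<^sup>2)) powr (q / 2) * Gamma (q / 2 + 1))"
    using q by (subst cnd_moment) (auto intro!: add_pos_nonneg sum_nonneg)
  also have "\<dots> = ennreal ((\<Sum>j\<in>J. (cmod (e j))\<^sup>2) powr (q / 2) * Gamma (q / 2 + 1))"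
  proof -
    have "(cmod a) powr q = ((cmod a)\<^sup>2) powr (q / 2)" by (simp add: sq_powr_half)
    then have "(cmod a) powr q * (1 + (\<Sum>j\<in>J'. (cmod (e' j))\<^sup>2)) powr (q / 2) = (\<Sum>j\<in>J. (cmod (e j))\<^sup>2) powr (q / 2)"
      by (simp add: S powr_mult sum_nonneg add_nonneg_nonneg)
    then show ?thesis using q
      by (subst ennreal_mult[symmetric]) (auto simp: Gamma_real_pos less_imp_le mult.assoc[symmetric])
  qed
  finally show ?thesis .
qed



lemma radial_cnd1:
  assumes [measurable]: "\<phi> \<in> borel_measurable borel"
  shows "(\<integral>\<^sup>+y. ennreal (cnd 1 y) * \<phi> ((cmod y)\<^sup>2) \<partial>lborel) = (\<integral>\<^sup>+r. ennreal (erlang_density 0 1 r) * \<phi> r \<partial>lborel)"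
proof -
  have "(\<integral>\<^sup>+y. ennreal (cnd 1 y) * \<phi> ((cmod y)\<^sup>2) \<partial>lborel)
      = (\<integral>\<^sup>+y. (\<lambda>r. ennreal (exp (- r) / pi) * \<phi> r) ((cmod (y::complex))\<^sup>2) \<partial>lborel)"
    by (simp add: cnd_def)
  also have "\<dots> = (\<integral>\<^sup>+r. ennreal pi * indicator {0..} r * (ennreal (exp (- r) / pi) * \<phi> r) \<partial>lborel)"
    by (rule nn_integral_radial) measurable
  also have "\<dots> = (\<integral>\<^sup>+r. ennreal (erlang_density 0 1 r) * \<phi> r \<partial>lborel)"
    by (intro nn_integral_cong) (auto simp: indicator_def erlang_density_def ennreal_mult[symmetric] mult.assoc[symmetric])
  finally show ?thesis .
qed

lemma L3:
  fixes J :: "'i set"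
  assumes J: "finite J" "J \<noteq> {}"
  shows "\<phi> \<in> borel_measurable borel \<Longrightarrow>
    (\<integral>\<^sup>+x. \<phi> (\<Sum>j\<in>J. (cmod (x j))\<^sup>2) \<partial>PiM J (\<lambda>_. CN1 1))
     = (\<integral>\<^sup>+r. ennreal (erlang_density (card J - 1) 1 r) * \<phi> r \<partial>lborel)"
  using J
proof (induction J arbitrary: \<phi> rule: finite_ne_induct)
  case (singleton j)
  note [measurable] = singleton
  have "(\<integral>\<^sup>+x. \<phi> (\<Sum>j\<in>{j}. (cmod (x j))\<^sup>2) \<partial>PiM {j} (\<lambda>_. CN1 1)) = (\<integral>\<^sup>+x. (\<lambda>y. \<phi> ((cmod y)\<^sup>2)) (x j) \<partial>PiM {j} (\<lambda>_. CN1 1))"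
    by simp
  also have "\<dots> = (\<integral>\<^sup>+y. \<phi> ((cmod y)\<^sup>2) \<partial>CN1 1)"
    by (rule CN1ps.product_nn_integral_singleton) measurable
  also have "\<dots> = (\<integral>\<^sup>+r. ennreal (erlang_density 0 1 r) * \<phi> r \<partial>lborel)"
    by (simp add: nn_integral_CN1 radial_cnd1)
  finally show ?case by simp
next
  case (insert j J)
  note [measurable] = insert.prems
  define \<psi> where "\<psi> = (\<lambda>t. \<integral>\<^sup>+y. ennreal (cnd 1 y) * \<phi> ((cmod y)\<^sup>2 + t) \<partial>lborel)"
  have [measurable]: "\<psi> \<in> borel_measurable borel"
    unfolding \<psi>_def by measurable
  have psi: "\<psi> t = (\<integral>\<^sup>+u. ennreal (erlang_density 0 1 u) * \<phi> (u + t) \<partial>lborel)" for t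
    unfolding \<psi>_def by (rule radial_cnd1[of "\<lambda>u. \<phi> (u + t)"]) measurable
  have "(\<integral>\<^sup>+x. \<phi> (\<Sum>i\<in>insert j J. (cmod (x i))\<^sup>2) \<partial>PiM (insert j J) (\<lambda>_. CN1 1))
      = (\<integral>\<^sup>+x. (\<integral>\<^sup>+y. \<phi> (\<Sum>i\<in>insert j J. (cmod ((x(j := y)) i))\<^sup>2) \<partial>CN1 1) \<partial>PiM J (\<lambda>_. CN1 1))"
    using insert by (subst CN1ps.product_nn_integral_insert) (auto, measurable)
  also have "\<dots> = (\<integral>\<^sup>+x. \<psi> (\<Sum>i\<in>J. (cmod (x i))\<^sup>2) \<partial>PiM J (\<lambda>_. CN1 1))"
  proof (rule nn_integral_cong)
    fix x
    have "(\<Sum>i\<in>J. (cmod ((x(j := y)) i))\<^sup>2) = (\<Sum>i\<in>J. (cmod (x i))\<^sup>2)" for y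
      using insert by (intro sum.cong) auto
    then show "(\<integral>\<^sup>+y. \<phi> (\<Sum>i\<in>insert j J. (cmod ((x(j := y)) i))\<^sup>2) \<partial>CN1 1) = \<psi> (\<Sum>i\<in>J. (cmod (x i))\<^sup>2)"
      using insert unfolding \<psi>_def by (subst nn_integral_CN1) simp_all
  qed
  also have "\<dots> = (\<integral>\<^sup>+r. ennreal (erlang_density (card J - 1) 1 r) * \<psi> r \<partial>lborel)"
    by (rule insert.IH) measurable
  also have "\<dots> = (\<integral>\<^sup>+r. (\<integral>\<^sup>+x. ennreal (erlang_density (card J - 1) 1 r) * (ennreal (erlang_density 0 1 (x - r)) * \<phi> x) \<partial>lborel) \<partial>lborel)"
  proof (rule nn_integral_cong)
    fix r :: real
    have "\<psi> r = (\<integral>\<^sup>+x. (\<lambda>u. ennreal (erlang_density 0 1 (u - r)) * \<phi> u) (x + r) \<partial>lborel)"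
      by (simp add: psi)
    also have "\<dots> = (\<integral>\<^sup>+x. ennreal (erlang_density 0 1 (x - r)) * \<phi> x \<partial>lborel)"
      by (rule nn_integral_translate) measurable
    finally show "ennreal (erlang_density (card J - 1) 1 r) * \<psi> r = (\<integral>\<^sup>+x. ennreal (erlang_density (card J - 1) 1 r) * (ennreal (erlang_density 0 1 (x - r)) * \<phi> x) \<partial>lborel)"
      by (simp add: nn_integral_cmult)
  qed
  also have "\<dots> = (\<integral>\<^sup>+x. (\<integral>\<^sup>+r. ennreal (erlang_density (card J - 1) 1 r) * (ennreal (erlang_density 0 1 (x - r)) * \<phi> x) \<partial>lborel) \<partial>lborel)"
    by (rule lborel_pair.Fubini') measurable
  also have "\<dots> = (\<integral>\<^sup>+x. (\<integral>\<^sup>+r. ennreal (erlang_density 0 1 (x - r)) * ennreal (erlang_density (card J - 1) 1 r) \<partial>lborel) * \<phi> x \<partial>lborel)"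
    by (intro nn_integral_cong, subst nn_integral_multc[symmetric]) (auto intro!: nn_integral_cong simp: mult_ac)
  also have "\<dots> = (\<integral>\<^sup>+x. ennreal (erlang_density (card (insert j J) - 1) 1 x) * \<phi> x \<partial>lborel)"
  proof -
    have "card J \<ge> 1" using insert by (simp add: Suc_leI card_gt_0_iff)
    then have "Suc 0 + Suc (card J - 1) - 1 = card (insert j J) - 1" using insert by simp
    then show ?thesis
      using fun_cong[OF convolution_erlang_density[of 1 0 "card J - 1"]] by (simp add: mult.commute)
  qed
  finally show ?case .
qed



lemma erlang_moment:
  assumes p: "p > 0"
  shows "(\<integral>\<^sup>+r. ennreal (erlang_density k 1 r) * ennreal (r powr p) \<partial>lborel) = ennreal (Gamma (p + real k + 1) / fact k)"
proof -
  have "(\<integral>\<^sup>+r. ennreal (erlang_density k 1 r) * ennreal (r powr p) \<partial>lborel)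
      = (\<integral>\<^sup>+r. ennreal (1 / fact k) * ennreal (indicator {0..} r * (r powr (p + real k) * exp (- r / 1))) \<partial>lborel)"
  proof (intro nn_integral_cong)
    fix r :: real
    show "ennreal (erlang_density k 1 r) * ennreal (r powr p) = ennreal (1 / fact k) * ennreal (indicator {0..} r * (r powr (p + real k) * exp (- r / 1)))"
    proof (cases "r > 0")
      case True
      then have "r ^ k = r powr real k" by (simp add: powr_realpow)
      then show ?thesis using True
        by (simp add: erlang_density_def ennreal_mult[symmetric] powr_add indicator_def field_simps)
    next
      case False
      then show ?thesis using p by (cases "r = 0") (auto simp: erlang_density_def indicator_def)
    qed
  qed
  also have "\<dots> = ennreal (1 / fact k) * ennreal (1 powr (p + real k + 1) * Gamma (p + real k + 1))"
    using p gamma_nn[of "p + real k" 1] by (subst nn_integral_cmult) auto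
  also have "\<dots> = ennreal (Gamma (p + real k + 1) / fact k)"
  proof -
    have "Gamma (p + real k + 1) > 0" using p by (intro Gamma_real_pos) simp
    then show ?thesis by (subst ennreal_mult[symmetric]) auto
  qed
  finally show ?thesis .
qed

lemma (in prob_space) V_moment:
  fixes Z :: "'i \<Rightarrow> 'a \<Rightarrow> complex" and hs gs :: "nat \<Rightarrow> 'i"
  assumes ind: "indep_vars (\<lambda>_. borel) Z I"
    and inj: "inj_on hs {..<B}" "inj_on gs {..<B}"
    and sub: "hs ` {..<B} \<subseteq> I" "gs ` {..<B} \<subseteq> I"
    and disj: "hs ` {..<B} \<inter> gs ` {..<B} = {}"
    and dh: "\<And>b. b < B \<Longrightarrow> distr M borel (Z (hs b)) = CN1 1"
    and dg: "\<And>b. b < B \<Longrightarrow> distr M borel (Z (gs b)) = CN1 1"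
    and B: "B \<ge> 1" and q: "q > 0"
  shows "(\<integral>\<^sup>+\<omega>. ennreal ((cmod (\<Sum>b<B. Z (hs b) \<omega> * Z (gs b) \<omega>)) powr q) \<partial>M)
       = ennreal (Gamma (q / 2 + 1) * (Gamma (q / 2 + real (B - 1) + 1) / fact (B - 1)))"
proof -
  define HJ where "HJ = hs ` {..<B}"
  define GJ where "GJ = gs ` {..<B}"
  define Xh where "Xh = (\<lambda>\<omega>. restrict (\<lambda>j. Z j \<omega>) HJ)"
  define Xg where "Xg = (\<lambda>\<omega>. restrict (\<lambda>j. Z j \<omega>) GJ)"
  have "0 \<in> {..<B}" using B by simp
  then have ne: "HJ \<noteq> {}" "GJ \<noteq> {}" unfolding HJ_def GJ_def by blast+
  have fin: "finite HJ" "finite GJ" by (auto simp: HJ_def GJ_def)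
  have rv: "i \<in> I \<Longrightarrow> random_variable borel (Z i)" for i
    using ind by (auto simp: indep_vars_def)
  have iv: "indep_var (PiM HJ (\<lambda>_. borel)) Xh (PiM GJ (\<lambda>_. borel)) Xg"
    unfolding Xh_def Xg_def using disj sub by (intro indep_var_restrict[OF ind]) (auto simp: HJ_def GJ_def)
  have dXh: "distr M (PiM HJ (\<lambda>_. borel)) Xh = PiM HJ (\<lambda>_. CN1 1)"
  proof -
    have "indep_vars (\<lambda>_. borel) Z HJ" using ind sub by (auto simp: HJ_def intro: indep_vars_subset)
    then have "distr M (PiM HJ (\<lambda>_. borel)) (\<lambda>x. \<lambda>i\<in>HJ. Z i x) = PiM HJ (\<lambda>i. distr M borel (Z i))"
      using ne sub rv by (subst indep_vars_iff_distr_eq_PiM'[symmetric]) (auto simp: HJ_def)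
    also have "\<dots> = PiM HJ (\<lambda>_. CN1 1)"
      by (rule PiM_cong) (auto simp: HJ_def dh)
    finally show ?thesis by (simp add: Xh_def)
  qed
  have dXg: "distr M (PiM GJ (\<lambda>_. borel)) Xg = PiM GJ (\<lambda>_. CN1 1)"
  proof -
    have "indep_vars (\<lambda>_. borel) Z GJ" using ind sub by (auto simp: GJ_def intro: indep_vars_subset)
    then have "distr M (PiM GJ (\<lambda>_. borel)) (\<lambda>x. \<lambda>i\<in>GJ. Z i x) = PiM GJ (\<lambda>i. distr M borel (Z i))"
      using ne sub rv by (subst indep_vars_iff_distr_eq_PiM'[symmetric]) (auto simp: GJ_def)
    also have "\<dots> = PiM GJ (\<lambda>_. CN1 1)"
      by (rule PiM_cong) (auto simp: GJ_def dg)
    finally show ?thesis by (simp add: Xg_def)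
  qed
  define F where "F = (\<lambda>(h::'i \<Rightarrow> complex, g::'i \<Rightarrow> complex). ennreal ((cmod (\<Sum>b<B. h (hs b) * g (gs b))) powr q))"
  have hsm: "b < B \<Longrightarrow> (\<lambda>h. h (hs b)) \<in> borel_measurable (PiM HJ (\<lambda>_. borel))" for b
    by (rule measurable_component_singleton) (auto simp: HJ_def)
  have gsm: "b < B \<Longrightarrow> (\<lambda>h. h (gs b)) \<in> borel_measurable (PiM GJ (\<lambda>_. borel))" for b
    by (rule measurable_component_singleton) (auto simp: GJ_def)
  have Fm: "F \<in> borel_measurable (PiM HJ (\<lambda>_. borel) \<Otimes>\<^sub>M PiM GJ (\<lambda>_. borel))"
    unfolding F_def using hsm gsm by measurable
  have Fm': "F \<in> borel_measurable (PiM HJ (\<lambda>_. CN1 1) \<Otimes>\<^sub>M PiM GJ (\<lambda>_. CN1 1))"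
  proof -
    have sPS: "sets (PiM HJ (\<lambda>_. CN1 1) \<Otimes>\<^sub>M PiM GJ (\<lambda>_. CN1 1)) = sets (PiM HJ (\<lambda>_. borel) \<Otimes>\<^sub>M PiM GJ (\<lambda>_. borel))"
      by (intro sets_pair_measure_cong sets_PiM_cong) simp_all
    show ?thesis using Fm by (simp only: measurable_cong_sets[OF sPS refl])
  qed
  interpret PH: prob_space "PiM HJ (\<lambda>_. CN1 1)" by (rule prob_space_PiM) (rule prob_space_CN1, simp)
  interpret PG: prob_space "PiM GJ (\<lambda>_. CN1 1)" by (rule prob_space_PiM) (rule prob_space_CN1, simp)
  interpret PHG: pair_prob_space "PiM HJ (\<lambda>_. CN1 1)" "PiM GJ (\<lambda>_. CN1 1)" ..
  have rvh: "random_variable (PiM HJ (\<lambda>_. borel)) Xh" and rvg: "random_variable (PiM GJ (\<lambda>_. borel)) Xg"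
    using iv by (auto dest: indep_var_rv1 indep_var_rv2)
  have "(\<integral>\<^sup>+\<omega>. ennreal ((cmod (\<Sum>b<B. Z (hs b) \<omega> * Z (gs b) \<omega>)) powr q) \<partial>M)
      = (\<integral>\<^sup>+\<omega>. F (Xh \<omega>, Xg \<omega>) \<partial>M)"
  proof (rule nn_integral_cong)
    fix \<omega>
    have "(\<Sum>b<B. Xh \<omega> (hs b) * Xg \<omega> (gs b)) = (\<Sum>b<B. Z (hs b) \<omega> * Z (gs b) \<omega>)"
      by (intro sum.cong) (auto simp: Xh_def Xg_def HJ_def GJ_def)
    then show "ennreal ((cmod (\<Sum>b<B. Z (hs b) \<omega> * Z (gs b) \<omega>)) powr q) = F (Xh \<omega>, Xg \<omega>)"
      by (simp add: F_def)
  qed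
  also have "\<dots> = (\<integral>\<^sup>+x. F x \<partial>distr M (PiM HJ (\<lambda>_. borel) \<Otimes>\<^sub>M PiM GJ (\<lambda>_. borel)) (\<lambda>\<omega>. (Xh \<omega>, Xg \<omega>)))"
    using rvh rvg Fm by (subst nn_integral_distr) auto
  also have "distr M (PiM HJ (\<lambda>_. borel) \<Otimes>\<^sub>M PiM GJ (\<lambda>_. borel)) (\<lambda>\<omega>. (Xh \<omega>, Xg \<omega>))
      = PiM HJ (\<lambda>_. CN1 1) \<Otimes>\<^sub>M PiM GJ (\<lambda>_. CN1 1)"
    using iv unfolding indep_var_distribution_eq by (simp add: dXh dXg)
  also have "(\<integral>\<^sup>+x. F x \<partial>(PiM HJ (\<lambda>_. CN1 1) \<Otimes>\<^sub>M PiM GJ (\<lambda>_. CN1 1)))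
      = (\<integral>\<^sup>+g. (\<integral>\<^sup>+h. F (h, g) \<partial>PiM HJ (\<lambda>_. CN1 1)) \<partial>PiM GJ (\<lambda>_. CN1 1))"
    by (rule PHG.nn_integral_snd[symmetric, OF Fm'])
  also have "\<dots> = (\<integral>\<^sup>+g. ennreal ((\<Sum>j\<in>GJ. (cmod (g j))\<^sup>2) powr (q / 2) * Gamma (q / 2 + 1)) \<partial>PiM GJ (\<lambda>_. CN1 1))"
  proof (rule nn_integral_cong)
    fix g :: "'i \<Rightarrow> complex"
    define e where "e = (\<lambda>k. g (gs (inv_into {..<B} hs k)))"
    have eh: "b < B \<Longrightarrow> e (hs b) = g (gs b)" for b
      using inj by (simp add: e_def inv_into_f_f)
    have s1: "(\<Sum>b<B. h (hs b) * g (gs b)) = (\<Sum>j\<in>HJ. e j * h j)" for h :: "'i \<Rightarrow> complex"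
      unfolding HJ_def using inj by (subst sum.reindex) (auto simp: eh mult.commute)
    have s2: "(\<Sum>j\<in>HJ. (cmod (e j))\<^sup>2) = (\<Sum>j\<in>GJ. (cmod (g j))\<^sup>2)"
      unfolding HJ_def GJ_def using inj by (simp add: sum.reindex eh)
    show "(\<integral>\<^sup>+h. F (h, g) \<partial>PiM HJ (\<lambda>_. CN1 1)) = ennreal ((\<Sum>j\<in>GJ. (cmod (g j))\<^sup>2) powr (q / 2) * Gamma (q / 2 + 1))"
      unfolding F_def by (simp add: s1 L2_moment[OF fin(1) q] s2)
  qed
  also have "\<dots> = (\<integral>\<^sup>+r. ennreal (erlang_density (card GJ - 1) 1 r) * ennreal (r powr (q / 2) * Gamma (q / 2 + 1)) \<partial>lborel)"
    by (rule L3[OF fin(2) ne(2), of "\<lambda>r. ennreal (r powr (q / 2) * Gamma (q / 2 + 1))"]) measurable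
  also have "\<dots> = ennreal (Gamma (q / 2 + 1)) * (\<integral>\<^sup>+r. ennreal (erlang_density (B - 1) 1 r) * ennreal (r powr (q / 2)) \<partial>lborel)"
  proof -
    have c: "card GJ = B" unfolding GJ_def using inj by (simp add: card_image)
    have G0: "Gamma (q / 2 + 1) > 0" using q by (intro Gamma_real_pos) simp
    show ?thesis using G0
      by (subst nn_integral_cmult[symmetric]) (auto intro!: nn_integral_cong simp: c ennreal_mult[symmetric] mult_ac)
  qed
  also have "\<dots> = ennreal (Gamma (q / 2 + 1) * (Gamma (q / 2 + real (B - 1) + 1) / fact (B - 1)))"
  proof -
    have em: "(\<integral>\<^sup>+r. ennreal (erlang_density (B - 1) 1 r) * ennreal (r powr (q / 2)) \<partial>lborel)
       = ennreal (Gamma (q / 2 + real (B - 1) + 1) / fact (B - 1))"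
      by (rule erlang_moment) (use q in simp)
    have G0: "Gamma (q / 2 + 1) > 0" "Gamma (q / 2 + real (B - 1) + 1) > 0"
      using q by (auto intro!: Gamma_real_pos)
    show ?thesis unfolding em using G0 by (subst ennreal_mult[symmetric]) auto
  qed
  finally show ?thesis .
qed



lemma CN_distr:
  assumes "CN_distributed M X s"
  shows "distr M borel X = CN1 s" "X \<in> borel_measurable M"
proof -
  have d: "distributed M lborel X (\<lambda>z. ennreal (cnd s z))"
    using assms by (simp add: CN_distributed_def cnd_def)
  have "distr M borel X = distr M lborel X" by (rule distr_cong) auto
  also have "\<dots> = CN1 s" using d by (simp add: distributed_def CN1_def)
  finally show "distr M borel X = CN1 s" .
  show "X \<in> borel_measurable M" using d by (auto simp: distributed_def)
qed

lemma Gamma_three_halves: "Gamma (3/2 :: real) = sqrt pi / 2"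
proof -
  have "Gamma (1/2 + 1 :: real) = 1/2 * Gamma (1/2)"
    by (rule Gamma_plus1, rule notI, drule nonpos_Ints_nonpos, simp)
  then show ?thesis by (simp add: Gamma_one_half_real)
qed

lemma Gamma_nat: "B \<ge> 1 \<Longrightarrow> Gamma (real B) = fact (B - 1)"
  using Gamma_fact[of "B - 1"] by (simp add: of_nat_diff)

lemma (in prob_space) A_moment:
  assumes "CN_distributed M X 1" and q: "q > 0"
  shows "(\<integral>\<^sup>+\<omega>. ennreal ((cmod (X \<omega>)) powr q) \<partial>M) = ennreal (Gamma (q / 2 + 1))"
proof -
  note d = CN_distr[OF assms(1)]
  have "(\<integral>\<^sup>+\<omega>. ennreal ((cmod (X \<omega>)) powr q) \<partial>M) = (\<integral>\<^sup>+w. ennreal ((cmod w) powr q) \<partial>distr M borel X)"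
    using d by (subst nn_integral_distr) auto
  also have "\<dots> = (\<integral>\<^sup>+w. ennreal (cnd 1 w) * ennreal ((cmod w) powr q) \<partial>lborel)"
    unfolding d(1) by (subst nn_integral_CN1) auto
  also have "\<dots> = ennreal (Gamma (q / 2 + 1))"
    using cnd_moment[OF _ q, of 1] by (simp add: ennreal_mult[symmetric] cnd_nonneg mult.commute)
  finally show ?thesis .
qed



lemma ennreal_sum3:
  fixes a :: real and f :: "'i \<Rightarrow> real" and g :: "'i \<Rightarrow> 'j \<Rightarrow> real"
  assumes "0 \<le> a" "\<And>i. i \<in> I \<Longrightarrow> 0 \<le> f i" "\<And>i j. i \<in> I \<Longrightarrow> j \<in> J \<Longrightarrow> 0 \<le> g i j"
  shows "ennreal a + (\<Sum>i\<in>I. ennreal (f i)) + (\<Sum>i\<in>I. \<Sum>j\<in>J. ennreal (g i j))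
       = ennreal (a + (\<Sum>i\<in>I. f i) + (\<Sum>i\<in>I. \<Sum>j\<in>J. g i j))"
proof -
  have g1: "(\<Sum>i\<in>I. \<Sum>j\<in>J. ennreal (g i j)) = (\<Sum>i\<in>I. ennreal (\<Sum>j\<in>J. g i j))"
    using assms(3) by (intro sum.cong refl sum_ennreal) auto
  also have "\<dots> = ennreal (\<Sum>i\<in>I. \<Sum>j\<in>J. g i j)"
    using assms(3) by (intro sum_ennreal sum_nonneg) auto
  finally have g2: "(\<Sum>i\<in>I. \<Sum>j\<in>J. ennreal (g i j)) = ennreal (\<Sum>i\<in>I. \<Sum>j\<in>J. g i j)" .
  have f2: "(\<Sum>i\<in>I. ennreal (f i)) = ennreal (\<Sum>i\<in>I. f i)"
    using assms(2) by (intro sum_ennreal) auto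
  have nn: "0 \<le> (\<Sum>i\<in>I. f i)" "0 \<le> (\<Sum>i\<in>I. \<Sum>j\<in>J. g i j)"
    using assms by (auto intro!: sum_nonneg)
  show ?thesis unfolding g2 f2 using assms(1) nn
    by (simp add: ennreal_plus add_nonneg_nonneg)
qed

theorem proposition1:
  fixes M :: "'a measure" and Z :: "chan_idx \<Rightarrow> 'a \<Rightarrow> complex"
    and K B Tc :: nat and \<beta>d \<beta>l P \<sigma>2 \<gamma> :: real and x :: "nat \<Rightarrow> complex"
  assumes "prob_space M"
    and "1 \<le> K" and "1 \<le> B" and "B \<le> K"
    and "Tc > K div B + 1"
    and "\<beta>d > 0" and "\<beta>l > 0" and "P > 0" and "\<sigma>2 > 0" and "\<gamma> > 0"
    and "\<forall>m < K div B + 1. cmod (x m) = 1"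
    and "prob_space.indep_vars M (\<lambda>_. borel) Z
           ({H k | k. k < K} \<union> {G k | k. k < K} \<union> {Hd} \<union> {N m | m. m < K div B + 1})"
    and "\<forall>k < K. CN_distributed M (Z (H k)) 1"
    and "\<forall>k < K. CN_distributed M (Z (G k)) 1"
    and "CN_distributed M (Z Hd) 1"
    and "\<forall>m < K div B + 1. CN_distributed M (Z (N m)) \<sigma>2"
  shows
    "(let K' = K div B;
          z = sqrt pi * Gamma (real B + 1/2) / (2 * Gamma (real B));
          \<xi>1 = \<beta>l * z\<^sup>2;
          \<xi>2 = \<beta>l * (real B - z\<^sup>2) + sqrt (pi * \<beta>d * \<beta>l) * z;
          pre = 1 - (real K' + 1) / real Tc;
          Rbar = pre * log 2 (1 + \<gamma> * (\<xi>1 * (real K')\<^sup>2 + \<xi>2 * real K' + \<beta>d))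
      in ennreal pre *
           (\<integral>\<^sup>+ \<omega>. ennreal (log 2 (1 + \<gamma> * eff_gain Z B K' P \<beta>d \<beta>l x \<omega>)) \<partial>M)
         \<le> ennreal Rbar)"
proof -
  interpret P: prob_space M by fact
  define n where "n = K div B"
  define z where "z = sqrt pi * Gamma (real B + 1/2) / (2 * Gamma (real B))"
  define I where "I = ({H k | k. k < K} \<union> {G k | k. k < K} \<union> {Hd} \<union> {N m | m. m < K div B + 1})"
  have ind: "P.indep_vars (\<lambda>_. borel) Z I" using assms(12) by (simp add: I_def)
  have B1: "B \<ge> 1" using assms(3) .
  have idx: "b + i * B < K" if "i < n" "b < B" for i b
  proof -
    have "Suc i \<le> n" using that by simp
    then have "Suc i * B \<le> n * B" by (rule mult_right_mono) simp
    also have "n * B \<le> K" by (simp add: n_def)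
    finally show ?thesis using that by simp
  qed
  have distH: "k < K \<Longrightarrow> distr M borel (Z (H k)) = CN1 1" for k using assms(13) CN_distr by blast
  have distG: "k < K \<Longrightarrow> distr M borel (Z (G k)) = CN1 1" for k using assms(14) CN_distr by blast
  have mH[measurable]: "k < K \<Longrightarrow> Z (H k) \<in> borel_measurable M" for k using assms(13) CN_distr by blast
  have mG[measurable]: "k < K \<Longrightarrow> Z (G k) \<in> borel_measurable M" for k using assms(14) CN_distr by blast
  have mHd[measurable]: "Z Hd \<in> borel_measurable M" using assms(15) CN_distr by blast
  define A where "A = (\<lambda>\<omega>. cmod (Z Hd \<omega>))"
  define V where "V = (\<lambda>i \<omega>. cmod (vgrp Z B i \<omega>))"
  have VM: "(\<integral>\<^sup>+\<omega>. ennreal ((V i \<omega>) powr q) \<partial>M) = ennreal (Gamma (q / 2 + 1) * (Gamma (q / 2 + real (B - 1) + 1) / fact (B - 1)))"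
    if i: "i < n" and q: "q > 0" for i q
    unfolding V_def vgrp_def
  proof (rule P.V_moment[OF ind, where hs="\<lambda>b. H (b + i * B)" and gs="\<lambda>b. G (b + i * B)"])
    show "inj_on (\<lambda>b. H (b + i * B)) {..<B}" "inj_on (\<lambda>b. G (b + i * B)) {..<B}"
      by (auto simp: inj_on_def)
    show "(\<lambda>b. H (b + i * B)) ` {..<B} \<subseteq> I" "(\<lambda>b. G (b + i * B)) ` {..<B} \<subseteq> I"
      using idx[OF i] by (auto simp: I_def)
    show "(\<lambda>b. H (b + i * B)) ` {..<B} \<inter> (\<lambda>b. G (b + i * B)) ` {..<B} = {}" by auto
    show "b < B \<Longrightarrow> distr M borel (Z (H (b + i * B))) = CN1 1" for b using idx[OF i] distH by blast
    show "b < B \<Longrightarrow> distr M borel (Z (G (b + i * B))) = CN1 1" for b using idx[OF i] distG by blast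
  qed (use B1 q in auto)
  have V1: "(\<integral>\<^sup>+\<omega>. ennreal (V i \<omega>) \<partial>M) = ennreal z" if i: "i < n" for i
  proof -
    have "(\<integral>\<^sup>+\<omega>. ennreal (V i \<omega>) \<partial>M) = (\<integral>\<^sup>+\<omega>. ennreal ((V i \<omega>) powr 1) \<partial>M)"
      by (simp add: V_def)
    also have "\<dots> = ennreal (Gamma (1 / 2 + 1) * (Gamma (1 / 2 + real (B - 1) + 1) / fact (B - 1)))"
      using VM[OF i, of 1] by simp
    also have "Gamma (1 / 2 + 1) * (Gamma (1 / 2 + real (B - 1) + 1) / fact (B - 1)) = z"
    proof -
      have e1: "1 / 2 + 1 = (3 / 2 :: real)" by simp
      have e2: "1 / 2 + real (B - 1) + 1 = real B + 1 / 2" using B1 by (simp add: of_nat_diff)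
      show ?thesis unfolding e1 e2 using Gamma_nat[OF B1] by (simp add: z_def Gamma_three_halves)
    qed
    finally show ?thesis .
  qed
  have V2: "(\<integral>\<^sup>+\<omega>. ennreal ((V i \<omega>)\<^sup>2) \<partial>M) = ennreal (real B)" if i: "i < n" for i
  proof -
    have "(\<integral>\<^sup>+\<omega>. ennreal ((V i \<omega>)\<^sup>2) \<partial>M) = (\<integral>\<^sup>+\<omega>. ennreal ((V i \<omega>) powr 2) \<partial>M)"
      by (simp add: V_def)
    also have "\<dots> = ennreal (Gamma (2 / 2 + 1) * (Gamma (2 / 2 + real (B - 1) + 1) / fact (B - 1)))"
      using VM[OF i, of 2] by simp
    also have "Gamma (2 / 2 + 1) * (Gamma (2 / 2 + real (B - 1) + 1) / fact (B - 1)) = real B"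
    proof -
      have g2: "Gamma (2 / 2 + 1 :: real) = 1" using Gamma_fact[of 1] by simp
      have e: "2 / 2 + real (B - 1) + 1 = real (Suc B)" using B1 by (simp add: of_nat_diff)
      have "Gamma (2 / 2 + real (B - 1) + 1) = fact B" unfolding e using Gamma_nat[of "Suc B"] by simp
      moreover have "fact B = real B * fact (B - 1)" using B1 fact_reduce[of B] by simp
      ultimately show ?thesis using g2 by simp
    qed
    finally show ?thesis .
  qed
  have A1: "(\<integral>\<^sup>+\<omega>. ennreal (A \<omega>) \<partial>M) = ennreal (sqrt pi / 2)"
    using P.A_moment[OF assms(15), of 1] by (simp add: A_def Gamma_three_halves[symmetric])
  have A2: "(\<integral>\<^sup>+\<omega>. ennreal ((A \<omega>)\<^sup>2) \<partial>M) = 1"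
    using P.A_moment[OF assms(15), of 2] Gamma_fact[of 1] by (simp add: A_def)
  have zpos: "z > 0"
    using B1 by (auto simp: z_def intro!: divide_pos_pos mult_pos_pos Gamma_real_pos)
  have Vm[measurable]: "V i \<in> borel_measurable M" if i: "i < n" for i
  proof -
    have [measurable]: "b < B \<Longrightarrow> Z (H (b + i * B)) \<in> borel_measurable M" for b using idx[OF i] mH by blast
    have [measurable]: "b < B \<Longrightarrow> Z (G (b + i * B)) \<in> borel_measurable M" for b using idx[OF i] mG by blast
    show ?thesis unfolding V_def vgrp_def by measurable
  qed
  have Am[measurable]: "A \<in> borel_measurable M" unfolding A_def by measurable
  define Kf where "Kf = (\<lambda>t. case t of None \<Rightarrow> {Hd} | Some i \<Rightarrow> (\<lambda>b. H (b + i * B)) ` {..<B} \<union> (\<lambda>b. G (b + i * B)) ` {..<B})"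
  define Oset where "Oset = insert None (Some ` {..<n})"
  have KfN: "Kf None = {Hd}" by (simp add: Kf_def)
  have KfS: "Kf (Some i) = (\<lambda>b. H (b + i * B)) ` {..<B} \<union> (\<lambda>b. G (b + i * B)) ` {..<B}" for i
    by (simp add: Kf_def)
  have KfI: "Kf t \<subseteq> I" if "t \<in> Oset" for t
    using that idx by (auto simp: Kf_def Oset_def I_def)
  have divB: "i = j" if "b < B" "b' < B" "b + i * B = b' + j * B" for b b' i j :: nat
  proof -
    have "(b + i * B) div B = i" using that(1) B1 by simp
    moreover have "(b' + j * B) div B = j" using that(2) B1 by simp
    ultimately show ?thesis using that(3) by metis
  qed
  have disjK: "disjoint_family_on Kf Oset"
    unfolding disjoint_family_on_def Oset_def Kf_def
    by (auto dest: divB)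
  have ind1: "P.indep_vars (\<lambda>t. PiM (Kf t) (\<lambda>_. borel)) (\<lambda>t \<omega>. restrict (\<lambda>j. Z j \<omega>) (Kf t)) Oset"
    by (rule P.indep_vars_restrict[OF ind KfI disjK])
  define Yf where "Yf = (\<lambda>t (f::chan_idx \<Rightarrow> complex). case t of None \<Rightarrow> cmod (f Hd) | Some i \<Rightarrow> cmod (\<Sum>b<B. f (H (b + i * B)) * f (G (b + i * B))))"
  have Yfm: "Yf t \<in> borel_measurable (PiM (Kf t) (\<lambda>_. borel))" if "t \<in> Oset" for t
  proof (cases t)
    case None
    have [measurable]: "(\<lambda>f. f Hd) \<in> borel_measurable (PiM (Kf None) (\<lambda>_. borel))"
      by (rule measurable_component_singleton) (simp add: KfN)
    show ?thesis unfolding Yf_def None by simp measurable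
  next
    case (Some i)
    have [measurable]: "b < B \<Longrightarrow> (\<lambda>f. f (H (b + i * B))) \<in> borel_measurable (PiM (Kf (Some i)) (\<lambda>_. borel))" for b
      by (rule measurable_component_singleton) (simp add: KfS)
    have [measurable]: "b < B \<Longrightarrow> (\<lambda>f. f (G (b + i * B))) \<in> borel_measurable (PiM (Kf (Some i)) (\<lambda>_. borel))" for b
      by (rule measurable_component_singleton) (simp add: KfS)
    show ?thesis unfolding Yf_def Some by simp measurable
  qed
  have ind2: "P.indep_vars (\<lambda>_. borel) (\<lambda>t \<omega>. Yf t (restrict (\<lambda>j. Z j \<omega>) (Kf t))) Oset"
    by (rule P.indep_vars_compose2[OF ind1 Yfm])
  define Y where "Y = (\<lambda>t \<omega>. case t of None \<Rightarrow> A \<omega> | Some i \<Rightarrow> V i \<omega>)"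
  have indY: "P.indep_vars (\<lambda>_. borel) Y Oset"
  proof (rule P.indep_vars_cong[THEN iffD1, OF refl _ refl ind2])
    fix t assume "t \<in> Oset"
    show "(\<lambda>\<omega>. Yf t (restrict (\<lambda>j. Z j \<omega>) (Kf t))) = Y t"
    proof (cases t)
      case None
      then show ?thesis by (simp add: Yf_def Y_def Kf_def A_def fun_eq_iff)
    next
      case (Some i)
      then show ?thesis
        by (auto simp: Yf_def Y_def Kf_def V_def vgrp_def fun_eq_iff intro!: arg_cong[where f=cmod] sum.cong)
    qed
  qed
  have prod2: "(\<integral>\<^sup>+\<omega>. ennreal (Y o1 \<omega> * Y o2 \<omega>) \<partial>M) = (\<integral>\<^sup>+\<omega>. ennreal (Y o1 \<omega>) \<partial>M) * (\<integral>\<^sup>+\<omega>. ennreal (Y o2 \<omega>) \<partial>M)"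
    if "o1 \<in> Oset" "o2 \<in> Oset" "o1 \<noteq> o2" for o1 o2
  proof -
    have iv2: "P.indep_vars (\<lambda>_. borel) Y {o1, o2}" using indY that by (auto intro: P.indep_vars_subset)
    have iv3: "P.indep_vars (\<lambda>_. borel) (\<lambda>i \<omega>. ennreal (Y i \<omega>)) {o1, o2}"
      by (rule P.indep_vars_compose2[OF iv2]) simp
    have "(\<integral>\<^sup>+\<omega>. (\<Prod>i\<in>{o1, o2}. ennreal (Y i \<omega>)) \<partial>M) = (\<Prod>i\<in>{o1, o2}. \<integral>\<^sup>+\<omega>. ennreal (Y i \<omega>) \<partial>M)"
      by (rule P.indep_vars_nn_integral[OF _ iv3]) simp_all
    then show ?thesis using that by (simp add: ennreal_mult Y_def A_def V_def split: option.split)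
  qed
  have Ann: "0 \<le> A \<omega>" for \<omega> by (simp add: A_def)
  have Vnn: "0 \<le> V i \<omega>" for i \<omega> by (simp add: V_def)
  have bd: "\<beta>d > 0" and bl: "\<beta>l > 0" using assms(6,7) .
  define c where "c = 2 * sqrt \<beta>d * sqrt \<beta>l"
  have cnn: "c \<ge> 0" using bd bl by (simp add: c_def)
  define W where "W = (\<lambda>\<omega>. (sqrt \<beta>d * A \<omega> + sqrt \<beta>l * (\<Sum>i<n. V i \<omega>))\<^sup>2)"
  have Wexp: "W \<omega> = \<beta>d * (A \<omega>)\<^sup>2 + (\<Sum>i<n. c * (A \<omega> * V i \<omega>)) + (\<Sum>i<n. \<Sum>j<n. \<beta>l * (V i \<omega> * V j \<omega>))" for \<omega>
  proof -
    have sq: "(\<Sum>i<n. V i \<omega>)\<^sup>2 = (\<Sum>i<n. \<Sum>j<n. V i \<omega> * V j \<omega>)"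
      by (simp add: power2_eq_square sum_product)
    have "W \<omega> = (sqrt \<beta>d)\<^sup>2 * (A \<omega>)\<^sup>2 + (sqrt \<beta>l)\<^sup>2 * (\<Sum>i<n. V i \<omega>)\<^sup>2 + c * (A \<omega> * (\<Sum>i<n. V i \<omega>))"
      by (simp add: W_def c_def power2_sum power_mult_distrib algebra_simps)
    also have "\<dots> = \<beta>d * (A \<omega>)\<^sup>2 + (\<Sum>i<n. c * (A \<omega> * V i \<omega>)) + (\<Sum>i<n. \<Sum>j<n. \<beta>l * (V i \<omega> * V j \<omega>))"
      using bd bl by (simp add: sq sum_distrib_left algebra_simps)
    finally show ?thesis .
  qed
  have Wm[measurable]: "W \<in> borel_measurable M" unfolding W_def by measurable
  have T1: "(\<integral>\<^sup>+\<omega>. ennreal (\<beta>d * (A \<omega>)\<^sup>2) \<partial>M) = ennreal \<beta>d"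
  proof -
    have "(\<integral>\<^sup>+\<omega>. ennreal (\<beta>d * (A \<omega>)\<^sup>2) \<partial>M) = (\<integral>\<^sup>+\<omega>. ennreal \<beta>d * ennreal ((A \<omega>)\<^sup>2) \<partial>M)"
      by (intro nn_integral_cong) (rule ennreal_mult[OF less_imp_le[OF bd] zero_le_power2])
    also have "\<dots> = ennreal \<beta>d * (\<integral>\<^sup>+\<omega>. ennreal ((A \<omega>)\<^sup>2) \<partial>M)"
      by (rule nn_integral_cmult) measurable
    finally show ?thesis using A2 by simp
  qed
  have T2: "(\<integral>\<^sup>+\<omega>. ennreal (c * (A \<omega> * V i \<omega>)) \<partial>M) = ennreal (c * (sqrt pi / 2 * z))" if i: "i < n" for i
  proof -
    have "(\<integral>\<^sup>+\<omega>. ennreal (A \<omega> * V i \<omega>) \<partial>M) = (\<integral>\<^sup>+\<omega>. ennreal (Y None \<omega> * Y (Some i) \<omega>) \<partial>M)"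
      by (simp add: Y_def)
    also have "\<dots> = (\<integral>\<^sup>+\<omega>. ennreal (Y None \<omega>) \<partial>M) * (\<integral>\<^sup>+\<omega>. ennreal (Y (Some i) \<omega>) \<partial>M)"
      using i by (intro prod2) (auto simp: Oset_def)
    also have "\<dots> = ennreal (sqrt pi / 2 * z)"
      using A1 V1[OF i] zpos by (simp add: Y_def ennreal_mult[symmetric])
    finally have X: "(\<integral>\<^sup>+\<omega>. ennreal (A \<omega> * V i \<omega>) \<partial>M) = ennreal (sqrt pi / 2 * z)" .
    have "(\<integral>\<^sup>+\<omega>. ennreal (c * (A \<omega> * V i \<omega>)) \<partial>M) = (\<integral>\<^sup>+\<omega>. ennreal c * ennreal (A \<omega> * V i \<omega>) \<partial>M)"
      by (intro nn_integral_cong) (rule ennreal_mult[OF cnn mult_nonneg_nonneg[OF Ann Vnn]])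
    also have "\<dots> = ennreal c * (\<integral>\<^sup>+\<omega>. ennreal (A \<omega> * V i \<omega>) \<partial>M)"
      by (rule nn_integral_cmult) (use i in measurable)
    also have "\<dots> = ennreal (c * (sqrt pi / 2 * z))"
      unfolding X by (rule ennreal_mult[symmetric]) (use cnn zpos in auto)
    finally show ?thesis .
  qed
  have T3: "(\<integral>\<^sup>+\<omega>. ennreal (\<beta>l * (V i \<omega> * V j \<omega>)) \<partial>M) = ennreal (\<beta>l * (if i = j then real B else z * z))"
    if i: "i < n" and j: "j < n" for i j
  proof -
    have "(\<integral>\<^sup>+\<omega>. ennreal (V i \<omega> * V j \<omega>) \<partial>M) = ennreal (if i = j then real B else z * z)"
    proof (cases "i = j")
      case True
      then show ?thesis using V2[OF i] by (simp add: power2_eq_square)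
    next
      case False
      have "(\<integral>\<^sup>+\<omega>. ennreal (V i \<omega> * V j \<omega>) \<partial>M) = (\<integral>\<^sup>+\<omega>. ennreal (Y (Some i) \<omega> * Y (Some j) \<omega>) \<partial>M)"
        by (simp add: Y_def)
      also have "\<dots> = (\<integral>\<^sup>+\<omega>. ennreal (Y (Some i) \<omega>) \<partial>M) * (\<integral>\<^sup>+\<omega>. ennreal (Y (Some j) \<omega>) \<partial>M)"
        using i j False by (intro prod2) (auto simp: Oset_def)
      also have "\<dots> = ennreal (z * z)"
        using V1[OF i] V1[OF j] zpos by (simp add: Y_def ennreal_mult[symmetric])
      finally show ?thesis using False by simp
    qed
    then have X: "(\<integral>\<^sup>+\<omega>. ennreal (V i \<omega> * V j \<omega>) \<partial>M) = ennreal (if i = j then real B else z * z)" .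
    have "(\<integral>\<^sup>+\<omega>. ennreal (\<beta>l * (V i \<omega> * V j \<omega>)) \<partial>M) = (\<integral>\<^sup>+\<omega>. ennreal \<beta>l * ennreal (V i \<omega> * V j \<omega>) \<partial>M)"
      by (intro nn_integral_cong) (rule ennreal_mult[OF less_imp_le[OF bl] mult_nonneg_nonneg[OF Vnn Vnn]])
    also have "\<dots> = ennreal \<beta>l * (\<integral>\<^sup>+\<omega>. ennreal (V i \<omega> * V j \<omega>) \<partial>M)"
      by (rule nn_integral_cmult) (use i j in measurable)
    also have "\<dots> = ennreal (\<beta>l * (if i = j then real B else z * z))"
      unfolding X by (rule ennreal_mult[symmetric]) (use bl zpos in auto)
    finally show ?thesis .
  qed
  define Q where "Q = \<beta>d + (\<Sum>i<n. c * (sqrt pi / 2 * z)) + (\<Sum>i<n. \<Sum>j<n. \<beta>l * (if i = j then real B else z * z))"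
  have EW: "(\<integral>\<^sup>+\<omega>. ennreal (W \<omega>) \<partial>M) = ennreal Q"
  proof -
    have pw: "ennreal (W \<omega>) = ennreal (\<beta>d * (A \<omega>)\<^sup>2) + (\<Sum>i<n. ennreal (c * (A \<omega> * V i \<omega>))) + (\<Sum>i<n. \<Sum>j<n. ennreal (\<beta>l * (V i \<omega> * V j \<omega>)))" for \<omega>
      unfolding Wexp using bd bl cnn Ann Vnn by (intro ennreal_sum3[symmetric]) auto
    have Vm': "i \<in> {..<n} \<Longrightarrow> V i \<in> borel_measurable M" for i using Vm by simp
    have m1: "(\<lambda>\<omega>. (\<Sum>i<n. ennreal (c * (A \<omega> * V i \<omega>)))) \<in> borel_measurable M"
      by (intro borel_measurable_sum measurable_compose[OF _ measurable_ennreal] borel_measurable_times Vm' Am) auto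
    have m2: "(\<lambda>\<omega>. (\<Sum>i<n. \<Sum>j<n. ennreal (\<beta>l * (V i \<omega> * V j \<omega>)))) \<in> borel_measurable M"
      by (intro borel_measurable_sum measurable_compose[OF _ measurable_ennreal] borel_measurable_times Vm') auto
    have m0: "(\<lambda>\<omega>. ennreal (\<beta>d * (A \<omega>)\<^sup>2)) \<in> borel_measurable M" by measurable
    have "(\<integral>\<^sup>+\<omega>. ennreal (W \<omega>) \<partial>M) = (\<integral>\<^sup>+\<omega>. ennreal (\<beta>d * (A \<omega>)\<^sup>2) + (\<Sum>i<n. ennreal (c * (A \<omega> * V i \<omega>))) + (\<Sum>i<n. \<Sum>j<n. ennreal (\<beta>l * (V i \<omega> * V j \<omega>))) \<partial>M)"
      by (simp only: pw)
    also have "\<dots> = (\<integral>\<^sup>+\<omega>. ennreal (\<beta>d * (A \<omega>)\<^sup>2) + (\<Sum>i<n. ennreal (c * (A \<omega> * V i \<omega>))) \<partial>M) + (\<integral>\<^sup>+\<omega>. (\<Sum>i<n. \<Sum>j<n. ennreal (\<beta>l * (V i \<omega> * V j \<omega>))) \<partial>M)"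
      by (rule nn_integral_add) (use m0 m1 m2 in auto)
    also have "(\<integral>\<^sup>+\<omega>. ennreal (\<beta>d * (A \<omega>)\<^sup>2) + (\<Sum>i<n. ennreal (c * (A \<omega> * V i \<omega>))) \<partial>M)
        = (\<integral>\<^sup>+\<omega>. ennreal (\<beta>d * (A \<omega>)\<^sup>2) \<partial>M) + (\<integral>\<^sup>+\<omega>. (\<Sum>i<n. ennreal (c * (A \<omega> * V i \<omega>))) \<partial>M)"
      by (rule nn_integral_add) (use m0 m1 in auto)
    also have "(\<integral>\<^sup>+\<omega>. (\<Sum>i<n. ennreal (c * (A \<omega> * V i \<omega>))) \<partial>M) = (\<Sum>i<n. \<integral>\<^sup>+\<omega>. ennreal (c * (A \<omega> * V i \<omega>)) \<partial>M)"
      by (rule nn_integral_sum) (intro measurable_compose[OF _ measurable_ennreal] borel_measurable_times Vm' Am; simp)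
    also have "(\<integral>\<^sup>+\<omega>. (\<Sum>i<n. \<Sum>j<n. ennreal (\<beta>l * (V i \<omega> * V j \<omega>))) \<partial>M) = (\<Sum>i<n. \<integral>\<^sup>+\<omega>. (\<Sum>j<n. ennreal (\<beta>l * (V i \<omega> * V j \<omega>))) \<partial>M)"
      by (rule nn_integral_sum) (intro borel_measurable_sum measurable_compose[OF _ measurable_ennreal] borel_measurable_times Vm'; simp)
    also have "(\<Sum>i<n. \<integral>\<^sup>+\<omega>. (\<Sum>j<n. ennreal (\<beta>l * (V i \<omega> * V j \<omega>))) \<partial>M) = (\<Sum>i<n. \<Sum>j<n. \<integral>\<^sup>+\<omega>. ennreal (\<beta>l * (V i \<omega> * V j \<omega>)) \<partial>M)"
      by (intro sum.cong refl nn_integral_sum) (intro measurable_compose[OF _ measurable_ennreal] borel_measurable_times Vm'; simp)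
    also have "(\<integral>\<^sup>+\<omega>. ennreal (\<beta>d * (A \<omega>)\<^sup>2) \<partial>M) + (\<Sum>i<n. \<integral>\<^sup>+\<omega>. ennreal (c * (A \<omega> * V i \<omega>)) \<partial>M)
         + (\<Sum>i<n. \<Sum>j<n. \<integral>\<^sup>+\<omega>. ennreal (\<beta>l * (V i \<omega> * V j \<omega>)) \<partial>M)
       = ennreal \<beta>d + (\<Sum>i<n. ennreal (c * (sqrt pi / 2 * z))) + (\<Sum>i<n. \<Sum>j<n. ennreal (\<beta>l * (if i = j then real B else z * z)))"
      by (simp add: T1 T2 T3)
    also have "\<dots> = ennreal Q"
      unfolding Q_def using bd bl cnn zpos by (intro ennreal_sum3) auto
    finally show ?thesis .
  qed
  have Qeq: "Q = \<beta>l * z\<^sup>2 * (real n)\<^sup>2 + (\<beta>l * (real B - z\<^sup>2) + sqrt (pi * \<beta>d * \<beta>l) * z) * real n + \<beta>d"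
  proof -
    have inner: "(\<Sum>j<n. \<beta>l * (if i = j then real B else z * z)) = \<beta>l * z * z * real n + \<beta>l * (real B - z * z)"
      if i: "i < n" for i
    proof -
      have "(\<Sum>j<n. \<beta>l * (if i = j then real B else z * z)) = (\<Sum>j<n. \<beta>l * z * z + (if i = j then \<beta>l * (real B - z * z) else 0))"
        by (intro sum.cong) (auto simp: algebra_simps)
      also have "\<dots> = \<beta>l * z * z * real n + \<beta>l * (real B - z * z)"
        using i by (simp add: sum.distrib)
      finally show ?thesis .
    qed
    have c2: "c * (sqrt pi / 2 * z) = sqrt (pi * \<beta>d * \<beta>l) * z"
      by (simp add: c_def real_sqrt_mult)
    have s1: "(\<Sum>i<n. c * (sqrt pi / 2 * z)) = real n * (sqrt (pi * \<beta>d * \<beta>l) * z)"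
      by (simp only: c2 sum_constant card_lessThan)
    have s2: "(\<Sum>i<n. \<Sum>j<n. \<beta>l * (if i = j then real B else z * z)) = (\<Sum>i<n. \<beta>l * z * z * real n + \<beta>l * (real B - z * z))"
      by (rule sum.cong[OF refl inner]) simp
    have "Q = \<beta>d + real n * (sqrt (pi * \<beta>d * \<beta>l) * z) + real n * (\<beta>l * z * z * real n + \<beta>l * (real B - z * z))"
      unfolding Q_def s1 s2 by simp
    then show ?thesis by (simp add: algebra_simps power2_eq_square)
  qed
  have Qpos: "Q > 0"
    using bd bl cnn zpos by (simp add: Q_def add_pos_nonneg sum_nonneg)
  have gam: "\<gamma> > 0" using assms(10) .
  define c1 where "c1 = \<gamma> / ((1 + \<gamma> * Q) * ln 2)"
  define c0 where "c0 = log 2 (1 + \<gamma> * Q) - c1 * Q"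
  have xpos: "1 + \<gamma> * Q > 0" using gam Qpos by (simp add: add_pos_pos)
  have c1nn: "c1 \<ge> 0" using gam xpos by (simp add: c1_def)
  have c0nn: "c0 \<ge> 0"
  proof -
    have "ln (1 / (1 + \<gamma> * Q)) \<le> 1 / (1 + \<gamma> * Q) - 1"
      using xpos by (intro ln_le_minus_one) simp
    then have "\<gamma> * Q / (1 + \<gamma> * Q) \<le> ln (1 + \<gamma> * Q)"
      using xpos by (simp add: ln_div field_simps)
    then have "\<gamma> * Q / (1 + \<gamma> * Q) / ln 2 \<le> ln (1 + \<gamma> * Q) / ln 2"
      by (rule divide_right_mono) simp_all
    then show ?thesis by (simp add: c0_def c1_def log_def field_simps)
  qed
  have effW: "eff_gain Z B n P \<beta>d \<beta>l x \<omega> \<le> W \<omega>" for \<omega>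
  proof -
    let ?S = "(\<Sum>i<n. phi_hat Z B n P \<beta>d \<beta>l x i \<omega> * vgrp Z B i \<omega>)"
    have n1: "cmod ?S \<le> (\<Sum>i<n. V i \<omega>)"
      by (rule order_trans[OF norm_sum]) (simp add: norm_mult phi_hat_def V_def)
    have "cmod (complex_of_real (sqrt \<beta>d) * Z Hd \<omega> + complex_of_real (sqrt \<beta>l) * ?S)
        \<le> cmod (complex_of_real (sqrt \<beta>d) * Z Hd \<omega>) + cmod (complex_of_real (sqrt \<beta>l) * ?S)"
      by (rule norm_triangle_ineq)
    also have "\<dots> \<le> sqrt \<beta>d * A \<omega> + sqrt \<beta>l * (\<Sum>i<n. V i \<omega>)"
      using bd bl n1 by (simp add: norm_mult A_def mult_left_mono)
    finally show ?thesis unfolding eff_gain_def W_def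
      by (rule power_mono) simp
  qed
  have bound: "log 2 (1 + \<gamma> * eff_gain Z B n P \<beta>d \<beta>l x \<omega>) \<le> c0 + c1 * W \<omega>" for \<omega>
  proof -
    have e0: "0 \<le> eff_gain Z B n P \<beta>d \<beta>l x \<omega>" by (simp add: eff_gain_def)
    have W0: "0 \<le> W \<omega>" by (simp add: W_def)
    have "log 2 (1 + \<gamma> * eff_gain Z B n P \<beta>d \<beta>l x \<omega>) \<le> log 2 (1 + \<gamma> * W \<omega>)"
      using e0 effW[of \<omega>] gam by (intro log_le_cancel_iff[THEN iffD2]) (auto intro: add_pos_nonneg mult_left_mono)
    also have "\<dots> \<le> c0 + c1 * W \<omega>"
    proof -
      have w1: "0 < 1 + \<gamma> * W \<omega>" using W0 gam by (simp add: add_pos_nonneg)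
      have "ln (1 + \<gamma> * W \<omega>) - ln (1 + \<gamma> * Q) = ln ((1 + \<gamma> * W \<omega>) / (1 + \<gamma> * Q))"
        using w1 xpos by (simp add: ln_div)
      also have "\<dots> \<le> (1 + \<gamma> * W \<omega>) / (1 + \<gamma> * Q) - 1"
        by (intro ln_le_minus_one divide_pos_pos xpos w1)
      also have "\<dots> = \<gamma> * (W \<omega> - Q) / (1 + \<gamma> * Q)"
        using xpos by (simp add: field_simps)
      finally have "ln (1 + \<gamma> * W \<omega>) - ln (1 + \<gamma> * Q) \<le> \<gamma> * (W \<omega> - Q) / (1 + \<gamma> * Q)" .
      then have "(ln (1 + \<gamma> * W \<omega>) - ln (1 + \<gamma> * Q)) / ln 2 \<le> \<gamma> * (W \<omega> - Q) / (1 + \<gamma> * Q) / ln 2"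
        by (rule divide_right_mono) simp_all
      moreover have "c0 + c1 * W \<omega> = ln (1 + \<gamma> * Q) / ln 2 + \<gamma> * (W \<omega> - Q) / (1 + \<gamma> * Q) / ln 2"
      proof -
        have "c0 + c1 * W \<omega> = log 2 (1 + \<gamma> * Q) + c1 * (W \<omega> - Q)"
          by (simp add: c0_def algebra_simps)
        moreover have "c1 * (W \<omega> - Q) = \<gamma> * (W \<omega> - Q) / (1 + \<gamma> * Q) / ln 2"
          by (simp add: c1_def divide_divide_eq_left)
        ultimately show ?thesis by (simp add: log_def)
      qed
      ultimately show ?thesis by (simp add: log_def diff_divide_distrib)
    qed
    finally show ?thesis .
  qed
  have int_bound: "(\<integral>\<^sup>+\<omega>. ennreal (log 2 (1 + \<gamma> * eff_gain Z B n P \<beta>d \<beta>l x \<omega>)) \<partial>M) \<le> ennreal (log 2 (1 + \<gamma> * Q))"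
  proof -
    have "(\<integral>\<^sup>+\<omega>. ennreal (log 2 (1 + \<gamma> * eff_gain Z B n P \<beta>d \<beta>l x \<omega>)) \<partial>M)
        \<le> (\<integral>\<^sup>+\<omega>. ennreal c0 + ennreal c1 * ennreal (W \<omega>) \<partial>M)"
    proof (rule nn_integral_mono)
      fix \<omega>
      have "ennreal (log 2 (1 + \<gamma> * eff_gain Z B n P \<beta>d \<beta>l x \<omega>)) \<le> ennreal (c0 + c1 * W \<omega>)"
        by (rule ennreal_leI) (rule bound)
      also have "\<dots> = ennreal c0 + ennreal c1 * ennreal (W \<omega>)"
        using c0nn c1nn by (simp add: W_def ennreal_plus ennreal_mult)
      finally show "ennreal (log 2 (1 + \<gamma> * eff_gain Z B n P \<beta>d \<beta>l x \<omega>)) \<le> ennreal c0 + ennreal c1 * ennreal (W \<omega>)" .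
    qed
    also have "\<dots> = ennreal c0 + ennreal c1 * ennreal Q"
      by (simp add: nn_integral_add nn_integral_cmult EW P.emeasure_space_1)
    also have "\<dots> = ennreal (log 2 (1 + \<gamma> * Q))"
      using c0nn c1nn Qpos by (simp add: c0_def ennreal_mult[symmetric] ennreal_plus[symmetric])
    finally show ?thesis .
  qed
  have prepos: "1 - (real n + 1) / real Tc > 0"
  proof -
    have "real n + 1 < real Tc" using assms(5) by (simp add: n_def)
    then show ?thesis by (simp add: field_simps)
  qed
  have "ennreal (1 - (real n + 1) / real Tc) * (\<integral>\<^sup>+\<omega>. ennreal (log 2 (1 + \<gamma> * eff_gain Z B n P \<beta>d \<beta>l x \<omega>)) \<partial>M)
      \<le> ennreal (1 - (real n + 1) / real Tc) * ennreal (log 2 (1 + \<gamma> * Q))"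
    by (rule mult_left_mono[OF int_bound]) simp
  also have "\<dots> = ennreal ((1 - (real n + 1) / real Tc) * log 2 (1 + \<gamma> * Q))"
  proof -
    have "log 2 (1 + \<gamma> * Q) \<ge> 0" by (subst zero_le_log_cancel_iff) (use xpos gam Qpos in auto)
    then show ?thesis using prepos by (simp add: ennreal_mult)
  qed
  finally show ?thesis
    unfolding Let_def n_def[symmetric] z_def[symmetric] Qeq[symmetric] .
qed

end
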